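(* Let $\Gamma$ be a finite connected non-bipartite tetravalent $G$-half-arc-transitive graph (for some $G\le\mathrm{Aut}(\Gamma)$) of order greater than $12$, with $\mathrm{rad}_G(\Gamma)=3$ and $\mathrm{att}_G(\Gamma)=2$. Then there exist a $2$-fold covering projection $\wp\colon\Gamma\to\Gamma'$ and an arc-transitive group $H\le\mathrm{Aut}(\Gamma')$ which lifts along $\wp$ in such a way that $\wp$ is $H$-split and non-sectional (i.e. $\Gamma$ is a non-sectional $H$-split cover of $\Gamma'$).
   Context: All graphs are finite and simple. For a tetravalent graph $\Gamma$ and $G\le \mathrm{Aut}(\Gamma)$, $\Gamma$ is $G$-half-arc-transitive if $G$ acts transitively on vertices and edges but not on arcs; then the $G$-orbits on arcs give two paired orientations of the edges, each vertex being tail of two and head of two incident edges. A $G$-alternating cycle is a cycle in which every two consecutive edges have a common head or a common tail. All have length $2\,\mathrm{rad}_G(\Gamma)$, and any two sharing a vertex meet in $\mathrm{att}_G(\Gamma)$ vertices. A covering projection $\wp\colon\tilde\Gamma\to\Gamma'$ of connected graphs is a surjective graph homomorphism mapping the neighbourhood of each vertex bijectively onto the neighbourhood of its image; it is $2$-fold if every fibre $\wp^{-1}(x)$ has size $2$. The group $\mathrm{CT}(\wp)$ of covering transformations consists of the automorphisms $\gamma$ of $\tilde\Gamma$ with $\wp\gamma=\wp$. A group $H\le\mathrm{Aut}(\Gamma')$ lifts along $\wp$ if every $h\in H$ has a lift, i.e. some $\tilde h\in\mathrm{Aut}(\tilde\Gamma)$ with $\wp\tilde h=h\wp$; the lifted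 group $\tilde H$ is the group of all lifts of elements of $H$, and it is an extension of $\mathrm{CT}(\wp)$ by $H$. The projection is $H$-split if $\mathrm{CT}(\wp)$ has a complement $\bar H$ in $\tilde H$. Such a complement is sectional if there is a $\bar H$-invariant set $S\subseteq V(\tilde\Gamma)$ meeting each fibre of $\wp$ in exactly one vertex. An $H$-split covering projection is non-sectional if no complement of $\mathrm{CT}(\wp)$ in $\tilde H$ is sectional. *)

theory Defs
  imports Main
begin

definition simple_graph :: "'a set \<Rightarrow> 'a set set \<Rightarrow> bool" where
  "simple_graph V E \<longleftrightarrow> finite V \<and>
     (\<forall>e\<in>E. \<exists>x y. x \<noteq> y \<and> x \<in> V \<and> y \<in> V \<and> e = {x, y})"

definition nbhd :: "'a set set \<Rightarrow> 'a \<Rightarrow> 'a set" where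
  "nbhd E x = {y. {x, y} \<in> E}"

definition connected_graph :: "'a set \<Rightarrow> 'a set set \<Rightarrow> bool" where
  "connected_graph V E \<longleftrightarrow> V \<noteq> {} \<and>
     (\<forall>x\<in>V. \<forall>y\<in>V. (x, y) \<in> {(u, v). {u, v} \<in> E}\<^sup>*)"

definition tetravalent :: "'a set \<Rightarrow> 'a set set \<Rightarrow> bool" where
  "tetravalent V E \<longleftrightarrow> (\<forall>x\<in>V. card (nbhd E x) = 4)"

definition bipartite :: "'a set \<Rightarrow> 'a set set \<Rightarrow> bool" where
  "bipartite V E \<longleftrightarrow> (\<exists>A\<subseteq>V. \<forall>e\<in>E. card (e \<inter> A) = 1)"

definition arcs :: "'a set set \<Rightarrow> ('a \<times> 'a) set" where
  "arcs E = {(x, y). {x, y} \<in> E}"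

text \<open>Automorphisms are represented extensionally: bijections of V preserving adjacency,
  acting as the identity outside V. Group product is composition.\<close>

definition graph_aut :: "'a set \<Rightarrow> 'a set set \<Rightarrow> ('a \<Rightarrow> 'a) \<Rightarrow> bool" where
  "graph_aut V E f \<longleftrightarrow> bij_betw f V V \<and>
     (\<forall>x\<in>V. \<forall>y\<in>V. {f x, f y} \<in> E \<longleftrightarrow> {x, y} \<in> E) \<and>
     (\<forall>x. x \<notin> V \<longrightarrow> f x = x)"

definition Aut :: "'a set \<Rightarrow> 'a set set \<Rightarrow> ('a \<Rightarrow> 'a) set" where
  "Aut V E = {f. graph_aut V E f}"

definition aut_subgroup :: "'a set \<Rightarrow> 'a set set \<Rightarrow> ('a \<Rightarrow> 'a) set \<Rightarrow> bool" where
  "aut_subgroup V E G \<longleftrightarrow> G \<subseteq> Aut V E \<and> id \<in> G \<and>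
     (\<forall>f\<in>G. \<forall>g\<in>G. f \<circ> g \<in> G) \<and> (\<forall>f\<in>G. \<exists>g\<in>G. g \<circ> f = id)"

definition vertex_transitive :: "'a set \<Rightarrow> ('a \<Rightarrow> 'a) set \<Rightarrow> bool" where
  "vertex_transitive V G \<longleftrightarrow> (\<forall>x\<in>V. \<forall>y\<in>V. \<exists>g\<in>G. g x = y)"

definition edge_transitive :: "'a set set \<Rightarrow> ('a \<Rightarrow> 'a) set \<Rightarrow> bool" where
  "edge_transitive E G \<longleftrightarrow> (\<forall>e\<in>E. \<forall>e'\<in>E. \<exists>g\<in>G. g ` e = e')"

definition arc_transitive :: "'a set set \<Rightarrow> ('a \<Rightarrow> 'a) set \<Rightarrow> bool" where
  "arc_transitive E G \<longleftrightarrow>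
     (\<forall>(x, y)\<in>arcs E. \<forall>(u, v)\<in>arcs E. \<exists>g\<in>G. g x = u \<and> g y = v)"

definition half_arc_transitive :: "'a set \<Rightarrow> 'a set set \<Rightarrow> ('a \<Rightarrow> 'a) set \<Rightarrow> bool" where
  "half_arc_transitive V E G \<longleftrightarrow>
     vertex_transitive V G \<and> edge_transitive E G \<and> \<not> arc_transitive E G"

text \<open>The orientation: the G-orbit of a (fixed, arbitrarily chosen) arc. For a G-half-arc-transitive
  graph the G-orbits on arcs are this orbit and its reverse.\<close>
definition orientation :: "'a set set \<Rightarrow> ('a \<Rightarrow> 'a) set \<Rightarrow> ('a \<times> 'a) set" where
  "orientation E G = (let (x0, y0) = (SOME a. a \<in> arcs E) in {(g x0, g y0) | g. g \<in> G})"

text \<open>A cycle is given by the list of its (distinct) vertices, of length at least 3, consecutive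
  vertices (cyclically) adjacent. It is G-alternating if at every vertex the two cycle edges
  have that vertex as common head or as common tail.\<close>
definition alt_cycle :: "'a set \<Rightarrow> 'a set set \<Rightarrow> ('a \<Rightarrow> 'a) set \<Rightarrow> 'a list \<Rightarrow> bool" where
  "alt_cycle V E G C \<longleftrightarrow> (let n = length C; D = orientation E G in
     n \<ge> 3 \<and> distinct C \<and> set C \<subseteq> V \<and>
     (\<forall>i<n. {C ! i, C ! ((i + 1) mod n)} \<in> E) \<and>
     (\<forall>i<n. (C ! ((i + n - 1) mod n), C ! i) \<in> D \<longleftrightarrow> (C ! ((i + 1) mod n), C ! i) \<in> D))"

definition cycle_edges :: "'a list \<Rightarrow> 'a set set" where
  "cycle_edges C = {{C ! i, C ! ((i + 1) mod length C)} | i. i < length C}"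

text \<open>rad: half the (common) length of the G-alternating cycles.\<close>
definition rad :: "'a set \<Rightarrow> 'a set set \<Rightarrow> ('a \<Rightarrow> 'a) set \<Rightarrow> nat" where
  "rad V E G = length (SOME C. alt_cycle V E G C) div 2"

text \<open>att: the (common) size of the intersection of two distinct G-alternating cycles
  sharing a vertex.\<close>
definition att :: "'a set \<Rightarrow> 'a set set \<Rightarrow> ('a \<Rightarrow> 'a) set \<Rightarrow> nat" where
  "att V E G = card (SOME S. \<exists>C1 C2. alt_cycle V E G C1 \<and> alt_cycle V E G C2 \<and>
       cycle_edges C1 \<noteq> cycle_edges C2 \<and> set C1 \<inter> set C2 \<noteq> {} \<and> S = set C1 \<inter> set C2)"

definition covering_projection ::
  "'a set \<Rightarrow> 'a set set \<Rightarrow> 'b set \<Rightarrow> 'b set set \<Rightarrow> ('a \<Rightarrow> 'b) \<Rightarrow> bool" where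
  "covering_projection V E V' E' p \<longleftrightarrow>
     connected_graph V E \<and> connected_graph V' E' \<and> p ` V = V' \<and>
     (\<forall>x\<in>V. \<forall>y\<in>V. {x, y} \<in> E \<longrightarrow> {p x, p y} \<in> E') \<and>
     (\<forall>x\<in>V. bij_betw p (nbhd E x) (nbhd E' (p x)))"

definition fibre :: "'a set \<Rightarrow> ('a \<Rightarrow> 'b) \<Rightarrow> 'b \<Rightarrow> 'a set" where
  "fibre V p x' = {x\<in>V. p x = x'}"

definition two_fold :: "'a set \<Rightarrow> 'b set \<Rightarrow> ('a \<Rightarrow> 'b) \<Rightarrow> bool" where
  "two_fold V V' p \<longleftrightarrow> (\<forall>x'\<in>V'. card (fibre V p x') = 2)"

definition CT :: "'a set \<Rightarrow> 'a set set \<Rightarrow> ('a \<Rightarrow> 'b) \<Rightarrow> ('a \<Rightarrow> 'a) set" where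
  "CT V E p = {g \<in> Aut V E. \<forall>x\<in>V. p (g x) = p x}"

definition is_lift :: "'a set \<Rightarrow> 'a set set \<Rightarrow> ('a \<Rightarrow> 'b) \<Rightarrow> ('b \<Rightarrow> 'b) \<Rightarrow> ('a \<Rightarrow> 'a) \<Rightarrow> bool" where
  "is_lift V E p h ht \<longleftrightarrow> ht \<in> Aut V E \<and> (\<forall>x\<in>V. p (ht x) = h (p x))"

definition lifts :: "'a set \<Rightarrow> 'a set set \<Rightarrow> ('a \<Rightarrow> 'b) \<Rightarrow> ('b \<Rightarrow> 'b) set \<Rightarrow> bool" where
  "lifts V E p H \<longleftrightarrow> (\<forall>h\<in>H. \<exists>ht. is_lift V E p h ht)"

definition lifted_group ::
  "'a set \<Rightarrow> 'a set set \<Rightarrow> ('a \<Rightarrow> 'b) \<Rightarrow> ('b \<Rightarrow> 'b) set \<Rightarrow> ('a \<Rightarrow> 'a) set" where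
  "lifted_group V E p H = {ht. \<exists>h\<in>H. is_lift V E p h ht}"

definition is_complement ::
  "'a set \<Rightarrow> 'a set set \<Rightarrow> ('a \<Rightarrow> 'b) \<Rightarrow> ('b \<Rightarrow> 'b) set \<Rightarrow> ('a \<Rightarrow> 'a) set \<Rightarrow> bool" where
  "is_complement V E p H Hb \<longleftrightarrow>
     aut_subgroup V E Hb \<and> Hb \<subseteq> lifted_group V E p H \<and>
     Hb \<inter> CT V E p = {id} \<and>
     lifted_group V E p H = {a \<circ> c | a c. a \<in> Hb \<and> c \<in> CT V E p}"

definition split_cover ::
  "'a set \<Rightarrow> 'a set set \<Rightarrow> ('a \<Rightarrow> 'b) \<Rightarrow> ('b \<Rightarrow> 'b) set \<Rightarrow> bool" where
  "split_cover V E p H \<longleftrightarrow> (\<exists>Hb. is_complement V E p H Hb)"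

definition sectional ::
  "'a set \<Rightarrow> 'b set \<Rightarrow> ('a \<Rightarrow> 'b) \<Rightarrow> ('a \<Rightarrow> 'a) set \<Rightarrow> bool" where
  "sectional V V' p Hb \<longleftrightarrow> (\<exists>S\<subseteq>V. (\<forall>g\<in>Hb. g ` S = S) \<and>
     (\<forall>x'\<in>V'. card (S \<inter> fibre V p x') = 1))"

definition non_sectional_split ::
  "'a set \<Rightarrow> 'a set set \<Rightarrow> 'b set \<Rightarrow> ('a \<Rightarrow> 'b) \<Rightarrow> ('b \<Rightarrow> 'b) set \<Rightarrow> bool" where
  "non_sectional_split V E V' p H \<longleftrightarrow> split_cover V E p H \<and>
     (\<forall>Hb. is_complement V E p H Hb \<longrightarrow> \<not> sectional V V' p Hb)"

end

theory Submission
  imports Defs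
begin

lemma graph_aut_bij:
  assumes "graph_aut V E f" shows "bij f"
proof -
  have b: "bij_betw f V V" and o: "\<And>x. x \<notin> V \<Longrightarrow> f x = x" using assms unfolding graph_aut_def by auto
  have "inj f"
  proof (rule injI)
    fix x y assume e: "f x = f y"
    show "x = y"
    proof (cases "x \<in> V"; cases "y \<in> V")
      assume "x \<in> V" "y \<in> V" thus ?thesis using b e by (auto simp: bij_betw_def inj_on_def)
    next
      assume "x \<in> V" "y \<notin> V" thus ?thesis using b e o by (metis bij_betwE)
    next
      assume "x \<notin> V" "y \<in> V" thus ?thesis using b e o by (metis bij_betwE)
    next
      assume "x \<notin> V" "y \<notin> V" thus ?thesis using e o by auto
    qed
  qed
  moreover have "surj f"
  proof -
    { fix y have "y \<in> range f"
      proof (cases "y \<in> V")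
        case True thus ?thesis using b by (metis bij_betw_def image_iff rangeI)
      next
        case False thus ?thesis using o by (metis rangeI)
      qed }
    thus ?thesis by auto
  qed
  ultimately show ?thesis by (simp add: bij_def)
qed

lemma graph_aut_comp:
  assumes "graph_aut V E f" "graph_aut V E g" shows "graph_aut V E (f \<circ> g)"
  using assms unfolding graph_aut_def
  by (auto simp: bij_betw_trans bij_betwE)

lemma graph_aut_id: "graph_aut V E id"
  unfolding graph_aut_def by auto

locale hatg =
  fixes V :: "'a set" and E :: "'a set set" and G :: "('a \<Rightarrow> 'a) set"
  assumes simple: "simple_graph V E"
    and conn: "connected_graph V E"
    and tetra: "tetravalent V E"
    and sub: "aut_subgroup V E G"
    and hat: "half_arc_transitive V E G"
begin

lemma finV: "finite V" using simple by (simp add: simple_graph_def)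

lemma edgeE: assumes "e \<in> E" obtains x y where "x \<noteq> y" "x \<in> V" "y \<in> V" "e = {x,y}"
  using simple assms unfolding simple_graph_def by blast

lemma edge_V: assumes "{x,y} \<in> E" shows "x \<in> V" "y \<in> V" "x \<noteq> y"
  using edgeE[OF assms] by (metis doubleton_eq_iff)+

lemma G_aut: "g \<in> G \<Longrightarrow> graph_aut V E g"
  using sub unfolding aut_subgroup_def Aut_def by auto

lemma G_id: "id \<in> G" using sub unfolding aut_subgroup_def by auto
lemma G_comp: "f \<in> G \<Longrightarrow> g \<in> G \<Longrightarrow> f \<circ> g \<in> G" using sub unfolding aut_subgroup_def by auto

lemma G_inv: assumes "f \<in> G" obtains g where "g \<in> G" "g \<circ> f = id" "f \<circ> g = id"
proof -
  obtain g where g: "g \<in> G" "g \<circ> f = id" using sub assms unfolding aut_subgroup_def by blast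
  have "bij f" using graph_aut_bij G_aut assms by blast
  have "f \<circ> g = id"
  proof
    fix x
    obtain y where "x = f y" using \<open>bij f\<close> by (metis bij_pointE)
    thus "(f \<circ> g) x = id x" using g(2) by (metis comp_apply id_apply)
  qed
  thus ?thesis using that g by blast
qed

lemma G_inj: "g \<in> G \<Longrightarrow> inj g" using graph_aut_bij G_aut bij_is_inj by blast

lemma G_V: "g \<in> G \<Longrightarrow> x \<in> V \<Longrightarrow> g x \<in> V"
  using G_aut unfolding graph_aut_def by (meson bij_betwE)

lemma G_V_iff: "g \<in> G \<Longrightarrow> g x \<in> V \<longleftrightarrow> x \<in> V"
  using G_aut G_V unfolding graph_aut_def by metis

lemma G_out: "g \<in> G \<Longrightarrow> x \<notin> V \<Longrightarrow> g x = x"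
  using G_aut unfolding graph_aut_def by auto

lemma G_edge: assumes "g \<in> G" shows "{g x, g y} \<in> E \<longleftrightarrow> {x, y} \<in> E"
proof (cases "x \<in> V \<and> y \<in> V")
  case True thus ?thesis using G_aut[OF assms] unfolding graph_aut_def by auto
next
  case False
  hence "\<not> (g x \<in> V \<and> g y \<in> V)" using G_V_iff assms by auto
  thus ?thesis using False edge_V by blast
qed

lemma G_image_V: "g \<in> G \<Longrightarrow> g ` V = V"
  using G_aut unfolding graph_aut_def bij_betw_def by auto

lemma vt: "x \<in> V \<Longrightarrow> y \<in> V \<Longrightarrow> \<exists>g\<in>G. g x = y"
  using hat unfolding half_arc_transitive_def vertex_transitive_def by auto

lemma et: "e \<in> E \<Longrightarrow> e' \<in> E \<Longrightarrow> \<exists>g\<in>G. g ` e = e'"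
  using hat unfolding half_arc_transitive_def edge_transitive_def by auto

lemma nat_: "\<not> arc_transitive E G"
  using hat unfolding half_arc_transitive_def by auto

lemma V_ne: "V \<noteq> {}" using conn unfolding connected_graph_def by auto

lemma nbhd_card: "x \<in> V \<Longrightarrow> card (nbhd E x) = 4" using tetra unfolding tetravalent_def by auto

lemma E_ne: "E \<noteq> {}"
proof -
  obtain x where "x \<in> V" using V_ne by auto
  hence "card (nbhd E x) = 4" by (rule nbhd_card)
  hence "nbhd E x \<noteq> {}" by auto
  thus ?thesis unfolding nbhd_def by auto
qed

definition a0 where "a0 = (SOME a. a \<in> arcs E)"
definition x0 where "x0 = fst a0"
definition y0 where "y0 = snd a0"

lemma a0E: "{x0, y0} \<in> E"
proof -
  obtain e where "e \<in> E" using E_ne by auto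
  then obtain x y where "{x,y} \<in> E" using edgeE by metis
  hence "(x,y) \<in> arcs E" by (simp add: arcs_def)
  hence "a0 \<in> arcs E" unfolding a0_def by (metis someI)
  thus ?thesis by (simp add: arcs_def x0_def y0_def case_prod_beta)
qed

definition D where "D = orientation E G"

lemma D_def': "D = {(g x0, g y0) | g. g \<in> G}"
  unfolding D_def orientation_def x0_def y0_def a0_def by (simp add: case_prod_beta)

lemma D_E: "(x,y) \<in> D \<Longrightarrow> {x,y} \<in> E"
  unfolding D_def' using a0E G_edge by auto

lemma D_total: "{x,y} \<in> E \<Longrightarrow> (x,y) \<in> D \<or> (y,x) \<in> D"
proof -
  assume "{x,y} \<in> E"
  then obtain g where g: "g \<in> G" "g ` {x0,y0} = {x,y}" using et a0E by blast
  hence "{g x0, g y0} = {x,y}" by auto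
  thus ?thesis unfolding D_def' using g(1) by (auto simp: doubleton_eq_iff)
qed

lemma D_G: assumes "g \<in> G" "(x,y) \<in> D" shows "(g x, g y) \<in> D"
proof -
  obtain h where h: "h \<in> G" "x = h x0" "y = h y0" using assms(2) unfolding D_def' by auto
  have "g \<circ> h \<in> G" using G_comp assms(1) h(1) by auto
  moreover have "(g x, g y) = ((g \<circ> h) x0, (g \<circ> h) y0)" using h by simp
  ultimately show ?thesis unfolding D_def' by blast
qed

lemma D_arc_trans: assumes "(x,y) \<in> D" "(u,v) \<in> D" shows "\<exists>g\<in>G. g x = u \<and> g y = v"
proof -
  obtain g1 where g1: "g1 \<in> G" "x = g1 x0" "y = g1 y0" using assms(1) unfolding D_def' by auto
  obtain g2 where g2: "g2 \<in> G" "u = g2 x0" "v = g2 y0" using assms(2) unfolding D_def' by auto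
  obtain h where h: "h \<in> G" "h \<circ> g1 = id" using G_inv g1(1) by metis
  have "g2 \<circ> h \<in> G" using G_comp g2 h by auto
  moreover have "(g2 \<circ> h) x = u" "(g2 \<circ> h) y = v" using h(2) g1 g2
    by (auto simp: fun_eq_iff comp_def)
  ultimately show ?thesis by blast
qed

lemma D_antisym: assumes "(x,y) \<in> D" shows "(y,x) \<notin> D"
proof
  assume yx: "(y,x) \<in> D"
  obtain s where s: "s \<in> G" "s x = y" "s y = x" using D_arc_trans[OF assms yx] by auto
  have "arc_transitive E G"
    unfolding arc_transitive_def
  proof (clarify)
    fix a b u v assume ab: "(a,b) \<in> arcs E" and uv: "(u,v) \<in> arcs E"
    have sw: "\<exists>m\<in>G. (m a, m b) \<in> D" if "{a,b} \<in> E" for a b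
    proof (cases "(a,b) \<in> D")
      case True thus ?thesis using G_id by (metis id_apply)
    next
      case False
      hence ba: "(b,a) \<in> D" using D_total that by blast
      obtain k where k: "k \<in> G" "k b = x" "k a = y" using D_arc_trans[OF ba assms] by auto
      have "(s (k a), s (k b)) = (x, y)" using s k by auto
      thus ?thesis using G_comp[OF s(1) k(1)] assms by (metis comp_apply)
    qed
    obtain m where m: "m \<in> G" "(m a, m b) \<in> D" using sw ab unfolding arcs_def by auto
    obtain n where n: "n \<in> G" "(n u, n v) \<in> D" using sw uv unfolding arcs_def by auto
    obtain t where t: "t \<in> G" "t (m a) = n u" "t (m b) = n v" using D_arc_trans[OF m(2) n(2)] by auto
    obtain ni where ni: "ni \<in> G" "ni \<circ> n = id" using G_inv n(1) by metis
    have "ni \<circ> t \<circ> m \<in> G" using G_comp ni t m by auto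
    moreover have "(ni \<circ> t \<circ> m) a = u" "(ni \<circ> t \<circ> m) b = v" using t ni
      by (simp_all add: pointfree_idE)
    ultimately show "\<exists>g\<in>G. g a = u \<and> g b = v" by blast
  qed
  thus False using nat_ by auto
qed

lemma D_G_iff: assumes "g \<in> G" shows "(g x, g y) \<in> D \<longleftrightarrow> (x,y) \<in> D"
proof
  assume a: "(g x, g y) \<in> D"
  hence "{x,y} \<in> E" using D_E G_edge assms by blast
  hence "(x,y) \<in> D \<or> (y,x) \<in> D" by (rule D_total)
  thus "(x,y) \<in> D" using D_G[OF assms, of y x] D_antisym a by blast
qed (simp add: D_G assms)

end

context hatg begin

definition Out where "Out x = {y. (x,y) \<in> D}"
definition Inn where "Inn x = {y. (y,x) \<in> D}"

lemma D_V: "(x,y) \<in> D \<Longrightarrow> x \<in> V \<and> y \<in> V" using D_E edge_V by blast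

lemma nbhd_OI: "nbhd E x = Out x \<union> Inn x"
proof -
  have "\<And>y. {x,y} \<in> E \<longleftrightarrow> (x,y) \<in> D \<or> (y,x) \<in> D"
    using D_E D_total by (metis insert_commute)
  thus ?thesis unfolding nbhd_def Out_def Inn_def by auto
qed

lemma OI_disj: "Out x \<inter> Inn x = {}"
  unfolding Out_def Inn_def using D_antisym by auto

lemma finO: "finite (Out x)" and finI: "finite (Inn x)"
proof -
  have "Out x \<subseteq> V" "Inn x \<subseteq> V" unfolding Out_def Inn_def using D_V by auto
  thus "finite (Out x)" "finite (Inn x)" using finV finite_subset by auto
qed

lemma O_G: assumes "g \<in> G" shows "Out (g x) = g ` Out x"
proof
  show "g ` Out x \<subseteq> Out (g x)" unfolding Out_def using D_G assms by auto
  show "Out (g x) \<subseteq> g ` Out x"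
  proof
    fix y assume "y \<in> Out (g x)"
    hence d: "(g x, y) \<in> D" unfolding Out_def by auto
    hence "y \<in> V" using D_V by auto
    then obtain y' where "y' \<in> V" "y = g y'" using G_image_V assms by blast
    thus "y \<in> g ` Out x" using d D_G_iff assms unfolding Out_def by auto
  qed
qed

lemma I_G: assumes "g \<in> G" shows "Inn (g x) = g ` Inn x"
proof
  show "g ` Inn x \<subseteq> Inn (g x)" unfolding Inn_def using D_G assms by auto
  show "Inn (g x) \<subseteq> g ` Inn x"
  proof
    fix y assume "y \<in> Inn (g x)"
    hence d: "(y, g x) \<in> D" unfolding Inn_def by auto
    hence "y \<in> V" using D_V by auto
    then obtain y' where "y' \<in> V" "y = g y'" using G_image_V assms by blast
    thus "y \<in> g ` Inn x" using d D_G_iff assms unfolding Inn_def by auto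
  qed
qed

lemma cardOI: "x \<in> V \<Longrightarrow> card (Out x) + card (Inn x) = 4"
proof -
  assume x: "x \<in> V"
  have "card (Out x \<union> Inn x) = card (Out x) + card (Inn x)"
    using card_Un_disjoint[OF finO finI OI_disj] .
  thus ?thesis using nbhd_card[OF x] nbhd_OI[of x] by simp
qed

lemma cardO_const: assumes "x \<in> V" "y \<in> V" shows "card (Out x) = card (Out y)"
proof -
  obtain g where g: "g \<in> G" "g x = y" using vt assms by auto
  have "Out y = g ` Out x" using O_G g by auto
  thus ?thesis using G_inj[OF g(1)] by (simp add: card_image inj_on_subset)
qed

lemma cardO: assumes "x \<in> V" shows "card (Out x) = 2" and "card (Inn x) = 2"
proof -
  define c where "c = card (Out x)"
  have co: "\<forall>y\<in>V. card (Out y) = c"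
  proof
    fix y assume y: "y \<in> V" show "card (Out y) = c" unfolding c_def by (rule cardO_const[OF y assms])
  qed
  have ci: "\<forall>y\<in>V. card (Inn y) = 4 - c"
  proof
    fix y assume "y \<in> V" thus "card (Inn y) = 4 - c" using co cardOI[of y] by simp
  qed
  have D1: "D = Sigma V Out" unfolding Out_def using D_V by auto
  have D2: "D = (\<lambda>(a,b). (b,a)) ` Sigma V Inn"
  proof
    show "D \<subseteq> (\<lambda>(a,b). (b,a)) ` Sigma V Inn"
    proof
      fix z assume z: "z \<in> D"
      obtain a b where ab: "z = (a,b)" by (cases z)
      hence "(b,a) \<in> Sigma V Inn" using z D_V unfolding Inn_def by auto
      thus "z \<in> (\<lambda>(a,b). (b,a)) ` Sigma V Inn" using ab by force
    qed
    show "(\<lambda>(a,b). (b,a)) ` Sigma V Inn \<subseteq> D" unfolding Inn_def by auto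
  qed
  have "card D = (\<Sum>y\<in>V. card (Out y))" unfolding D1 using card_SigmaI[OF finV] finO by blast
  also have "\<dots> = card V * c" using co by simp
  finally have e1: "card D = card V * c" .
  have "inj_on (\<lambda>(a,b). (b,a)) (Sigma V Inn)" by (auto simp: inj_on_def)
  hence "card D = card (Sigma V Inn)" unfolding D2 by (rule card_image)
  also have "\<dots> = (\<Sum>y\<in>V. card (Inn y))" using card_SigmaI[OF finV] finI by blast
  also have "\<dots> = card V * (4 - c)" using ci by simp
  finally have "card V * c = card V * (4 - c)" using e1 by simp
  moreover have "card V > 0" using finV V_ne by (simp add: card_gt_0_iff)
  ultimately have "c = 4 - c" by simp
  hence "c = 2" by linarith
  thus "card (Out x) = 2" "card (Inn x) = 2" using c_def ci assms by auto
qed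

definition other where
  "other u v = (if v \<in> Out u then the_elem (Out u - {v}) else the_elem (Inn u - {v}))"

lemma card2_other: assumes "card A = 2" "v \<in> A" shows "the_elem (A - {v}) \<in> A" "the_elem (A - {v}) \<noteq> v"
  "\<And>w. w \<in> A \<Longrightarrow> w \<noteq> v \<Longrightarrow> w = the_elem (A - {v})"
proof -
  have "card (A - {v}) = 1" using assms by simp
  then obtain w where w: "A - {v} = {w}" using card_1_singletonE by blast
  show "the_elem (A - {v}) \<in> A" "the_elem (A - {v}) \<noteq> v" using w by auto
  show "\<And>w'. w' \<in> A \<Longrightarrow> w' \<noteq> v \<Longrightarrow> w' = the_elem (A - {v})" using w by auto
qed

lemma other_Out: assumes "v \<in> Out u" shows "other u v \<in> Out u" "other u v \<noteq> v"
  "\<And>w. w \<in> Out u \<Longrightarrow> w \<noteq> v \<Longrightarrow> w = other u v"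
proof -
  have u: "u \<in> V" using assms D_V unfolding Out_def by auto
  note c = card2_other[OF cardO(1)[OF u] assms]
  have e: "other u v = the_elem (Out u - {v})" using assms by (simp add: other_def)
  show "other u v \<in> Out u" "other u v \<noteq> v" unfolding e by (rule c(1), rule c(2))
  show "\<And>w. w \<in> Out u \<Longrightarrow> w \<noteq> v \<Longrightarrow> w = other u v" unfolding e by (rule c(3))
qed

lemma other_Inn: assumes "v \<in> Inn u" shows "other u v \<in> Inn u" "other u v \<noteq> v"
  "\<And>w. w \<in> Inn u \<Longrightarrow> w \<noteq> v \<Longrightarrow> w = other u v"
proof -
  have u: "u \<in> V" using assms D_V unfolding Inn_def by auto
  have nO: "v \<notin> Out u" using assms OI_disj by auto
  note c = card2_other[OF cardO(2)[OF u] assms]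
  have e: "other u v = the_elem (Inn u - {v})" using nO by (simp add: other_def)
  show "other u v \<in> Inn u" "other u v \<noteq> v" unfolding e by (rule c(1), rule c(2))
  show "\<And>w. w \<in> Inn u \<Longrightarrow> w \<noteq> v \<Longrightarrow> w = other u v" unfolding e by (rule c(3))
qed

lemma nbhd_cases: assumes "{u,v} \<in> E" obtains "v \<in> Out u" | "v \<in> Inn u"
  using assms nbhd_OI[of u] unfolding nbhd_def by auto

lemma other_nbhd: assumes "{u,v} \<in> E" shows "{u, other u v} \<in> E"
proof -
  have "other u v \<in> Out u \<union> Inn u" using other_Out(1) other_Inn(1) nbhd_cases[OF assms] by blast
  thus ?thesis using nbhd_OI[of u] unfolding nbhd_def by auto
qed

lemma other_ne: assumes "{u,v} \<in> E" shows "other u v \<noteq> v"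
  using nbhd_cases[OF assms] other_Out(2) other_Inn(2) by metis

lemma other_inv: assumes "{u,v} \<in> E" shows "other u (other u v) = v"
proof -
  have "v \<in> Out u \<or> v \<in> Inn u" using assms nbhd_OI[of u] unfolding nbhd_def by auto
  thus ?thesis
  proof
    assume v: "v \<in> Out u"
    show ?thesis using other_Out(3)[OF other_Out(1)[OF v] v] other_Out(2)[OF v] by metis
  next
    assume v: "v \<in> Inn u"
    show ?thesis using other_Inn(3)[OF other_Inn(1)[OF v] v] other_Inn(2)[OF v] by metis
  qed
qed

lemma other_char: assumes "{u,v} \<in> E" "{u,w} \<in> E" "w \<noteq> v" "(v,u) \<in> D \<longleftrightarrow> (w,u) \<in> D"
  shows "w = other u v"
proof (cases "(v,u) \<in> D")
  case True thus ?thesis using assms other_Inn(3) unfolding Inn_def by auto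
next
  case False
  hence "(u,v) \<in> D" "(u,w) \<in> D" using assms D_total by (metis insert_commute)+
  thus ?thesis using assms other_Out(3) unfolding Out_def by auto
qed

lemma other_same: assumes "{u,v} \<in> E" shows "(v,u) \<in> D \<longleftrightarrow> (other u v, u) \<in> D"
proof (cases "(v,u) \<in> D")
  case True thus ?thesis using other_Inn(1)[of v u] unfolding Inn_def by auto
next
  case False
  hence "(u,v) \<in> D" using assms D_total by (metis insert_commute)
  hence "(u, other u v) \<in> D" using other_Out(1)[of v u] unfolding Out_def by auto
  thus ?thesis using False D_antisym by auto
qed

lemma other_G: assumes "g \<in> G" "{u,v} \<in> E" shows "g (other u v) = other (g u) (g v)"
proof (rule other_char)
  show "{g u, g v} \<in> E" using assms G_edge by auto
  show "{g u, g (other u v)} \<in> E" using assms G_edge other_nbhd by auto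
  show "g (other u v) \<noteq> g v" using other_ne[OF assms(2)] G_inj[OF assms(1)] by (auto dest: injD)
  show "(g v, g u) \<in> D \<longleftrightarrow> (g (other u v), g u) \<in> D"
    using D_G_iff[OF assms(1)] other_same[OF assms(2)] by auto
qed

end

lemma card2_eq: assumes "card A = 2" "a \<in> A" "b \<in> A" "a \<noteq> b" shows "A = {a, b}"
proof -
  have "finite A" using assms(1) card.infinite by fastforce
  moreover have "card {a,b} = 2" using assms(4) by simp
  ultimately show ?thesis using card_subset_eq[of A "{a,b}"] assms by auto
qed

context hatg begin

definition walk :: "(int \<Rightarrow> 'a) \<Rightarrow> bool" where
  "walk f \<longleftrightarrow> (\<forall>n. {f n, f (n+1)} \<in> E \<and> f (n+2) = other (f (n+1)) (f n))"

lemma walk_E: "walk f \<Longrightarrow> {f n, f (n+1)} \<in> E" unfolding walk_def by blast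
lemma walk_rule: "walk f \<Longrightarrow> f (n+2) = other (f (n+1)) (f n)" unfolding walk_def by blast
lemma walk_V: "walk f \<Longrightarrow> f n \<in> V" using walk_E edge_V by blast
lemma walk_ne: "walk f \<Longrightarrow> f (n+1) \<noteq> f n" using walk_E edge_V by metis
lemma walk_ne2: assumes "walk f" shows "f (n+2) \<noteq> f n"
proof -
  have "{f (n+1), f n} \<in> E" using walk_E[OF assms, of n] by (simp add: insert_commute)
  thus ?thesis using walk_rule[OF assms, of n] other_ne by metis
qed

lemma walk_back: assumes "walk f" shows "f n = other (f (n+1)) (f (n+2))"
proof -
  have "{f (n+1), f n} \<in> E" using walk_E[OF assms, of n] by (simp add: insert_commute)
  thus ?thesis using walk_rule[OF assms, of n] other_inv by metis
qed

lemma walk_rule1: assumes "walk f" shows "f (n+1) = other (f n) (f (n - 1))"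
proof -
  have "f (n - 1 + 2) = other (f (n - 1 + 1)) (f (n - 1))" by (rule walk_rule[OF assms])
  moreover have "n - 1 + 2 = n + 1" "n - 1 + 1 = n" by simp_all
  ultimately show ?thesis by metis
qed

lemma walk_back1: assumes "walk f" shows "f (n - 1) = other (f n) (f (n+1))"
proof -
  have "f (n - 1) = other (f (n - 1 + 1)) (f (n - 1 + 2))" by (rule walk_back[OF assms])
  moreover have "n - 1 + 2 = n + 1" "n - 1 + 1 = n" by simp_all
  ultimately show ?thesis by metis
qed

lemma walk_shift: assumes "walk f" shows "walk (\<lambda>n. f (n + k))"
  unfolding walk_def
proof
  fix n
  have "{f (n+k), f (n+k+1)} \<in> E" "f (n+k+2) = other (f (n+k+1)) (f (n+k))"
    using walk_E[OF assms] walk_rule[OF assms] by auto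
  thus "{f (n + k), f (n + 1 + k)} \<in> E \<and> f (n + 2 + k) = other (f (n + 1 + k)) (f (n + k))"
    by (simp add: algebra_simps)
qed

lemma walk_rev: assumes "walk f" shows "walk (\<lambda>n. f (k - n))"
  unfolding walk_def
proof
  fix n
  have "{f (k-n-1), f (k-n-1+1)} \<in> E" using walk_E[OF assms] by blast
  hence 1: "{f (k-n), f (k-n-1)} \<in> E" by (simp add: insert_commute)
  have "f (k-n-2) = other (f (k-n-2+1)) (f (k-n-2+2))" by (rule walk_back[OF assms])
  hence 2: "f (k-n-2) = other (f (k-n-1)) (f (k-n))" by (simp add: algebra_simps)
  show "{f (k - n), f (k - (n + 1))} \<in> E \<and> f (k - (n + 2)) = other (f (k - (n + 1))) (f (k - n))"
    using 1 2 by (simp add: algebra_simps)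
qed

lemma walk_G: assumes "walk f" "g \<in> G" shows "walk (\<lambda>n. g (f n))"
  unfolding walk_def
proof
  fix n
  have e: "{f (n+1), f n} \<in> E" using walk_E[OF assms(1), of n] by (simp add: insert_commute)
  show "{g (f n), g (f (n + 1))} \<in> E \<and> g (f (n + 2)) = other (g (f (n + 1))) (g (f n))"
    using walk_E[OF assms(1)] G_edge[OF assms(2)] walk_rule[OF assms(1)] other_G[OF assms(2) e] by auto
qed

lemma walk_det: assumes "walk f" "walk h" "f m = h m" "f (m+1) = h (m+1)"
  shows "f n = h n"
proof -
  have "f i = h i \<and> f (i+1) = h (i+1)" for i
  proof (induction i rule: int_induct[where k=m])
    case base thus ?case using assms by auto
  next
    case (step1 i)
    thus ?case using walk_rule[OF assms(1), of i] walk_rule[OF assms(2), of i] by (simp add: add.assoc)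
  next
    case (step2 i)
    have a: "f i = h i" "f (i+1) = h (i+1)" using step2 by auto
    have "f (i-1) = other (f i) (f (i+1))" by (rule walk_back1[OF assms(1)])
    also have "\<dots> = other (h i) (h (i+1))" using a by metis
    also have "\<dots> = h (i - 1)" by (rule walk_back1[OF assms(2), symmetric])
    finally show ?case using a(1) by simp
  qed
  thus ?thesis by blast
qed

definition cls :: "(int \<Rightarrow> 'a) \<Rightarrow> int \<Rightarrow> bool" where
  "cls f n \<longleftrightarrow> (f n, f (n+1)) \<in> D"

lemma cls_step: assumes "walk f" shows "cls f (n+1) \<longleftrightarrow> \<not> cls f n"
proof -
  have e: "{f (n+1), f n} \<in> E" using walk_E[OF assms, of n] by (simp add: insert_commute)
  have a: "(f n, f (n+1)) \<in> D \<longleftrightarrow> (f (n+2), f (n+1)) \<in> D"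
    using other_same[OF e] walk_rule[OF assms, of n] by simp
  have e2: "{f (n+1), f (n+1+1)} \<in> E" by (rule walk_E[OF assms])
  have "(f (n+1), f (n+2)) \<in> D \<longleftrightarrow> \<not> (f (n+2), f (n+1)) \<in> D"
    using D_total[OF e2] D_antisym by (auto simp: add.assoc)
  thus ?thesis unfolding cls_def using a by (simp add: add.assoc)
qed

lemma cls_par: assumes "walk f" shows "cls f n \<longleftrightarrow> (cls f 0 \<longleftrightarrow> even n)"
proof (induction n rule: int_induct[where k=0])
  case base thus ?case by simp
next
  case (step1 i) thus ?case using cls_step[OF assms, of i] by simp
next
  case (step2 i) thus ?case using cls_step[OF assms, of "i-1"] by (cases "cls f 0") auto
qed

lemma cls_shift: "cls (\<lambda>n. f (n + k)) n = cls f (n + k)"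
  unfolding cls_def by (simp add: algebra_simps)

lemma cls_G: assumes "g \<in> G" shows "cls (\<lambda>n. g (f n)) n = cls f n"
  unfolding cls_def using D_G_iff[OF assms] by simp

lemma walk_nbrs: assumes "walk f"
  shows "cls f n \<Longrightarrow> Out (f n) = {f (n-1), f (n+1)}" "\<not> cls f n \<Longrightarrow> Inn (f n) = {f (n-1), f (n+1)}"
proof -
  have e: "{f n, f (n - 1)} \<in> E" using walk_E[OF assms, of "n-1"] by (simp add: insert_commute)
  have r: "f (n+1) = other (f n) (f (n-1))" by (rule walk_rule1[OF assms])
  have ne: "f (n+1) \<noteq> f (n-1)"
  proof -
    have "n - 1 + 2 = n + 1" by simp
    thus ?thesis using walk_ne2[OF assms, of "n-1"] by metis
  qed
  have c: "cls f (n-1) \<longleftrightarrow> \<not> cls f n" using cls_step[OF assms, of "n-1"] by simp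
  have dd: "(f (n-1), f n) \<in> D \<or> (f n, f (n-1)) \<in> D" using D_total e by (metis insert_commute)
  have fV: "f n \<in> V" using walk_V[OF assms] .
  { assume cn: "cls f n"
    hence "(f n, f (n-1)) \<in> D" using c dd unfolding cls_def by auto
    hence a: "f (n-1) \<in> Out (f n)" unfolding Out_def by auto
    have "f (n+1) \<in> Out (f n)" using r other_Out(1)[OF a] by simp
    thus "Out (f n) = {f (n-1), f (n+1)}" using card2_eq[OF cardO(1)[OF fV] a] ne by auto }
  { assume cn: "\<not> cls f n"
    hence "(f (n-1), f n) \<in> D" using c unfolding cls_def by auto
    hence a: "f (n-1) \<in> Inn (f n)" unfolding Inn_def by auto
    have "f (n+1) \<in> Inn (f n)" using r other_Inn(1)[OF a] by simp
    thus "Inn (f n) = {f (n-1), f (n+1)}" using card2_eq[OF cardO(2)[OF fV] a] ne by auto }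
qed

lemma walk_same_vertex: assumes "walk h" "walk w" "h 0 = w 0" "cls h 0 = cls w 0"
  shows "(\<forall>n. h n = w n) \<or> (\<forall>n. h n = w (- n))"
proof -
  have "h 1 \<in> {w (-1), w 1}"
  proof (cases "cls h 0")
    case True
    hence "Out (h 0) = {h (0-1), h (0+1)}" "Out (w 0) = {w (0-1), w (0+1)}"
      using walk_nbrs[OF assms(1)] walk_nbrs[OF assms(2)] assms(4) by auto
    thus ?thesis using assms(3) by auto
  next
    case False
    hence "Inn (h 0) = {h (0-1), h (0+1)}" "Inn (w 0) = {w (0-1), w (0+1)}"
      using walk_nbrs[OF assms(1)] walk_nbrs[OF assms(2)] assms(4) by auto
    thus ?thesis using assms(3) by auto
  qed
  thus ?thesis
  proof
    assume "h 1 = w (-1)"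
    have "h n = w (0 - n)" for n
      using walk_det[OF assms(1) walk_rev[OF assms(2), of 0], of 0] assms(3) \<open>h 1 = w (-1)\<close> by simp
    thus ?thesis by simp
  next
    assume "h 1 \<in> {w 1}"
    have "h n = w n" for n using walk_det[OF assms(1,2), of 0] assms(3) \<open>h 1 \<in> {w 1}\<close> by simp
    thus ?thesis by simp
  qed
qed

lemma walk_norefl: assumes "walk f" shows "\<not> (\<forall>n. f (c - n) = f n)"
proof
  assume r: "\<forall>n. f (c - n) = f n"
  show False
  proof (cases "even c")
    case True
    then obtain m where m: "c = 2 * m" by (metis evenE)
    have "f (c - (m+1)) = f (m+1)" using r by blast
    moreover have "c - (m+1) = (m - 1)" using m by simp
    ultimately have "f (m-1) = f (m+1)" by simp
    moreover have "m - 1 + 2 = m + 1" by simp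
    ultimately show False using walk_ne2[OF assms, of "m-1"] by metis
  next
    case False
    then obtain m where m: "c = 2 * m + 1" by (metis oddE)
    have "f (c - (m+1)) = f (m+1)" using r by blast
    moreover have "c - (m+1) = m" using m by simp
    ultimately show False using walk_ne[OF assms, of m] by simp
  qed
qed

lemma walk_same: assumes "walk f" "f i = f j" "cls f i = cls f j"
  shows "f (n + (j - i)) = f n"
proof -
  have "f (j+1) \<in> {f (i-1), f (i+1)}"
  proof (cases "cls f i")
    case True
    hence "Out (f i) = {f (i-1), f (i+1)}" "Out (f j) = {f (j-1), f (j+1)}"
      using walk_nbrs[OF assms(1)] assms(3) by auto
    thus ?thesis using assms(2) by auto
  next
    case False
    hence "Inn (f i) = {f (i-1), f (i+1)}" "Inn (f j) = {f (j-1), f (j+1)}"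
      using walk_nbrs[OF assms(1)] assms(3) by auto
    thus ?thesis using assms(2) by auto
  qed
  thus ?thesis
  proof
    assume a: "f (j+1) = f (i-1)"
    have "f (i + j - m) = f m" for m
      using walk_det[OF walk_rev[OF assms(1), of "i+j"] assms(1), of j] assms(2) a by (simp add: algebra_simps)
    hence False using walk_norefl[OF assms(1), of "i+j"] by blast
    thus ?thesis ..
  next
    assume a: "f (j+1) \<in> {f (i+1)}"
    have h1: "(\<lambda>n. f (n + (j - i))) i = f i" using assms(2) by simp
    have h2: "(\<lambda>n. f (n + (j - i))) (i+1) = f (i+1)" using a by (simp add: algebra_simps)
    show ?thesis using walk_det[OF walk_shift[OF assms(1), of "j-i"] assms(1) h1 h2] by simp
  qed
qed

end

context hatg begin

definition nxt :: "'a \<times> 'a \<Rightarrow> 'a \<times> 'a" where "nxt p = (snd p, other (snd p) (fst p))"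

definition AE where "AE = {(a,b). {a,b} \<in> E}"

lemma AE_fin: "finite AE"
proof -
  have "AE \<subseteq> V \<times> V" unfolding AE_def using edge_V by auto
  thus ?thesis using finV finite_subset by blast
qed

lemma nxt_AE: "p \<in> AE \<Longrightarrow> nxt p \<in> AE"
proof -
  assume p: "p \<in> AE"
  obtain a b where ab: "p = (a,b)" by (cases p)
  have "{b,a} \<in> E" using p ab unfolding AE_def by (simp add: insert_commute)
  hence "{b, other b a} \<in> E" by (rule other_nbhd)
  thus ?thesis using ab unfolding AE_def nxt_def by simp
qed

lemma nxt_inj: assumes "p \<in> AE" "p' \<in> AE" "nxt p = nxt p'" shows "p = p'"
proof -
  obtain a b where ab: "p = (a,b)" by (cases p)
  obtain a' b' where ab': "p' = (a',b')" by (cases p')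
  have bb: "b = b'" and oo: "other b a = other b a'" using assms(3) ab ab' unfolding nxt_def by auto
  have e1: "{b,a} \<in> E" using assms(1) ab unfolding AE_def by (simp add: insert_commute)
  have e2: "{b,a'} \<in> E" using assms(2) ab' bb unfolding AE_def by (simp add: insert_commute)
  have "a = a'" using other_inv[OF e1] other_inv[OF e2] oo by metis
  thus ?thesis using ab ab' bb by simp
qed

lemma per_mult: fixes f :: "int \<Rightarrow> 'b" and q k :: int assumes "\<forall>n. f (n + q) = f n" shows "f (n + q * k) = f n"
proof (induction k rule: int_induct[where k=0])
  case base thus ?case by simp
next
  case (step1 i)
  have "f (n + q * (i + 1)) = f ((n + q * i) + q)" by (simp add: algebra_simps)
  thus ?case using assms step1 by simp
next
  case (step2 i)
  have "f (n + q * i) = f ((n + q * (i - 1)) + q)" by (simp add: algebra_simps)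
  thus ?case using assms step2 by simp
qed

lemma per_mod: fixes f :: "int \<Rightarrow> 'b" and q a :: int assumes "\<forall>n. f (n + q) = f n" shows "f (a mod q) = f a"
proof -
  have "a = a mod q + q * (a div q)" by (rule mod_mult_div_eq[symmetric])
  hence "f a = f (a mod q + q * (a div q))" by metis
  also have "\<dots> = f (a mod q)" by (rule per_mult[OF assms])
  finally show ?thesis by simp
qed

lemma walk_exists: assumes "{u,v} \<in> E"
  shows "\<exists>f q. walk f \<and> f 0 = u \<and> f 1 = v \<and> q > 0 \<and> (\<forall>n. f (n + int q) = f n)"
proof -
  define st where "st n = (nxt ^^ n) (u,v)" for n
  have st0: "st 0 = (u,v)" unfolding st_def by simp
  have stS: "st (Suc n) = nxt (st n)" for n unfolding st_def by simp
  have stA: "st n \<in> AE" for n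
  proof (induction n)
    case 0 thus ?case using assms st0 unfolding AE_def by simp
  next
    case (Suc n) thus ?case using stS nxt_AE by simp
  qed
  have "\<not> inj st"
  proof
    assume "inj st"
    moreover have "range st \<subseteq> AE" using stA by auto
    hence "finite (range st)" using AE_fin by (rule finite_subset)
    ultimately have "finite (UNIV :: nat set)" using finite_imageD by auto
    thus False by simp
  qed
  then obtain i j where ij: "i \<noteq> j" "st i = st j" unfolding inj_def by auto
  obtain i j where ij: "i < j" "st i = st j"
  proof (cases "i < j")
    case True thus ?thesis using that ij by blast
  next
    case False thus ?thesis using that[of j i] ij by auto
  qed
  define d where "d = j - i"
  have d0: "d > 0" using ij d_def by simp
  have bk: "\<And>k. st k = st (k + d) \<Longrightarrow> st 0 = st d"
  proof -
    fix k show "st k = st (k + d) \<Longrightarrow> st 0 = st d"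
    proof (induction k)
      case 0 thus ?case by simp
    next
      case (Suc k)
      hence "nxt (st k) = nxt (st (k + d))" using stS by simp
      hence "st k = st (k + d)" using nxt_inj[OF stA stA] by auto
      thus ?case using Suc.IH by simp
    qed
  qed
  have sd: "st 0 = st d" using bk[of i] ij d_def by simp
  have per: "st (n + d) = st n" for n
  proof (induction n)
    case 0 thus ?case using sd by simp
  next
    case (Suc n) thus ?case using stS by simp
  qed
  define sz where "sz n = st (nat (n mod int d))" for n
  have szS: "sz (n+1) = nxt (sz n)" for n
  proof -
    define r where "r = n mod int d"
    have r0: "0 \<le> r" "r < int d" unfolding r_def using d0 by simp_all
    have m1: "(n+1) mod int d = (r + 1) mod int d" unfolding r_def by (simp add: mod_add_left_eq)
    show ?thesis
    proof (cases "r + 1 < int d")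
      case True
      hence "(r+1) mod int d = r + 1" using r0 by simp
      hence "nat ((n+1) mod int d) = Suc (nat r)" using m1 r0 by simp
      thus ?thesis unfolding sz_def r_def[symmetric] using stS by simp
    next
      case False
      hence rd: "r + 1 = int d" using r0 by simp
      hence "(n+1) mod int d = 0" using m1 by simp
      hence "sz (n+1) = st 0" unfolding sz_def by simp
      also have "\<dots> = st d" by (rule sd)
      also have "d = Suc (nat r)" using rd r0 by linarith
      hence "st d = st (Suc (nat r))" by simp
      also have "\<dots> = nxt (st (nat r))" by (rule stS)
      also have "st (nat r) = sz n" unfolding sz_def r_def ..
      finally show ?thesis .
    qed
  qed
  define f where "f n = fst (sz n)" for n
  have sn: "snd (sz n) = f (n+1)" for n unfolding f_def using szS[of n] by (simp add: nxt_def)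
  have szA: "sz n \<in> AE" for n unfolding sz_def using stA by simp
  have wf: "walk f" unfolding walk_def
  proof
    fix n
    have "{fst (sz n), snd (sz n)} \<in> E" using szA[of n] unfolding AE_def by (simp add: case_prod_beta)
    hence 1: "{f n, f (n+1)} \<in> E" using sn f_def by simp
    have "f (n+2) = fst (sz (n+1+1))" unfolding f_def by (simp add: add.assoc)
    also have "\<dots> = snd (sz (n+1))" using szS[of "n+1"] by (simp add: nxt_def)
    also have "\<dots> = other (snd (sz n)) (fst (sz n))" using szS[of n] by (simp add: nxt_def)
    finally have "f (n+2) = other (f (n+1)) (f n)" using sn f_def by simp
    thus "{f n, f (n + 1)} \<in> E \<and> f (n + 2) = other (f (n + 1)) (f n)" using 1 by simp
  qed
  have f0: "f 0 = u" unfolding f_def sz_def using st0 by simp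
  have f1: "f 1 = v" using sn[of 0] st0 unfolding sz_def by simp
  have fp: "\<forall>n. f (n + int d) = f n" unfolding f_def sz_def by simp
  show ?thesis using wf f0 f1 fp d0 by blast
qed

end

context hatg begin

lemma shift_elem: assumes "walk f" "cls f a = cls f b"
  shows "\<exists>g\<in>G. g (f a) = f b \<and> g (f (a+1)) = f (b+1)"
proof (cases "cls f a")
  case True
  hence "(f a, f (a+1)) \<in> D" "(f b, f (b+1)) \<in> D" using assms(2) unfolding cls_def by auto
  thus ?thesis using D_arc_trans by blast
next
  case False
  hence "\<not> cls f b" using assms(2) by simp
  hence "(f (a+1), f a) \<in> D" "(f (b+1), f b) \<in> D"
    using False D_total walk_E[OF assms(1)] unfolding cls_def by (metis insert_commute)+
  thus ?thesis using D_arc_trans by blast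
qed

lemma refl_elem: assumes "walk f"
  shows "\<exists>g\<in>G. g (f a) = f a \<and> g (f (a+1)) = f (a - 1)"
proof (cases "cls f a")
  case True
  hence "Out (f a) = {f (a-1), f (a+1)}" using walk_nbrs[OF assms] by auto
  hence "(f a, f (a+1)) \<in> D" "(f a, f (a - 1)) \<in> D" unfolding Out_def by auto
  thus ?thesis using D_arc_trans by blast
next
  case False
  hence "Inn (f a) = {f (a-1), f (a+1)}" using walk_nbrs[OF assms] by auto
  hence "(f (a+1), f a) \<in> D" "(f (a - 1), f a) \<in> D" unfolding Inn_def by auto
  thus ?thesis using D_arc_trans by blast
qed

lemma refl_walk: assumes "walk f" "g \<in> G" "g (f a) = f a" "g (f (a+1)) = f (a - 1)"
  shows "g (f n) = f (2 * a - n)"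
proof -
  have h1: "(\<lambda>n. g (f n)) a = (\<lambda>n. f (2*a - n)) a" using assms(3) by simp
  have h2: "(\<lambda>n. g (f n)) (a+1) = (\<lambda>n. f (2*a - n)) (a+1)" using assms(4) by (simp add: algebra_simps)
  show ?thesis using walk_det[OF walk_G[OF assms(1,2)] walk_rev[OF assms(1)] h1 h2] by simp
qed

lemma shift_walk: assumes "walk f" "g \<in> G" "g (f a) = f b" "g (f (a+1)) = f (b+1)"
  shows "g (f n) = f (n + (b - a))"
proof -
  have h1: "(\<lambda>n. g (f n)) a = (\<lambda>n. f (n + (b - a))) a" using assms(3) by simp
  have h2: "(\<lambda>n. g (f n)) (a+1) = (\<lambda>n. f (n + (b - a))) (a+1)" using assms(4) by (simp add: algebra_simps)
  show ?thesis using walk_det[OF walk_G[OF assms(1,2)] walk_shift[OF assms(1)] h1 h2] by simp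
qed

lemma cls_val: assumes "f a = f b" "f (a+1) = f (b+1)" shows "cls f a = cls f b"
  unfolding cls_def using assms by simp

lemma walk_diff: assumes "walk f" "f i = f j" "cls f i \<noteq> cls f j" shows False
proof -
  obtain g where g: "g \<in> G" "g (f i) = f i" "g (f (i+1)) = f (i - 1)" using refl_elem[OF assms(1)] by blast
  have gf: "g (f n) = f (2*i - n)" for n using refl_walk[OF assms(1) g] .
  have a: "f (2*i - j) = f j" using gf[of j] assms(2) g(2) by simp
  have c: "cls f (2*i - j) = cls f j"
  proof -
    have "even (2*i - j) \<longleftrightarrow> even j" by simp
    thus ?thesis using cls_par[OF assms(1), of "2*i - j"] cls_par[OF assms(1), of j] by simp
  qed
  define s where "s = j - i"
  have per2: "f (n + 2 * s) = f n" for n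
    using walk_same[OF assms(1) a c, of n] unfolding s_def by (simp add: algebra_simps)
  have so: "odd s"
  proof -
    have "(even i) \<noteq> (even j)" using assms(3) cls_par[OF assms(1), of i] cls_par[OF assms(1), of j] by auto
    thus ?thesis unfolding s_def by auto
  qed
  have ci: "cls f i = cls f (i+2)" using cls_par[OF assms(1), of i] cls_par[OF assms(1), of "i+2"] by simp
  obtain r where r: "r \<in> G" "r (f i) = f (i+2)" "r (f (i+1)) = f (i+2+1)"
    using shift_elem[OF assms(1) ci] by blast
  have rf: "r (f n) = f (n + 2)" for n using shift_walk[OF assms(1) r] by simp
  have Q: "f (i + 2*k) = f (j + 2*k)" for k
  proof (induction k rule: int_induct[where k=0])
    case base thus ?case using assms(2) by simp
  next
    case (step1 k)
    have "f (i + 2*(k+1)) = r (f (i + 2*k))" using rf[of "i+2*k"] by (simp add: algebra_simps)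
    also have "\<dots> = r (f (j + 2*k))" using step1 by simp
    also have "\<dots> = f (j + 2*(k+1))" using rf[of "j+2*k"] by (simp add: algebra_simps)
    finally show ?case .
  next
    case (step2 k)
    have "r (f (i + 2*(k-1))) = f (i + 2*k)" using rf[of "i+2*(k-1)"] by (simp add: algebra_simps)
    also have "\<dots> = f (j + 2*k)" using step2 by simp
    also have "\<dots> = r (f (j + 2*(k-1)))" using rf[of "j+2*(k-1)"] by (simp add: algebra_simps)
    finally show ?case using G_inj[OF r(1)] by (auto dest: injD)
  qed
  have P: "f (n + s) = f n" for n
  proof (cases "even (n - i)")
    case True
    then obtain k where k: "n - i = 2 * k" by (metis evenE)
    have "f (n + s) = f (j + 2*k)" using k unfolding s_def by (simp add: algebra_simps)
    also have "\<dots> = f (i + 2*k)" using Q by simp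
    also have "\<dots> = f n" using k by (simp add: algebra_simps)
    finally show ?thesis .
  next
    case False
    hence "even (n - j)" using so unfolding s_def by simp
    then obtain k where k: "n - j = 2 * k" by (metis evenE)
    have "f (n + s) = f ((i + 2*k) + 2 * s)" using k unfolding s_def by (simp add: algebra_simps)
    also have "\<dots> = f (i + 2*k)" by (rule per2)
    also have "\<dots> = f (j + 2*k)" using Q by simp
    also have "\<dots> = f n" using k by (simp add: algebra_simps)
    finally show ?thesis .
  qed
  have "cls f (i + s) = cls f i" using P[of i] P[of "i+1"] unfolding cls_def by (simp add: algebra_simps)
  moreover have "cls f (i + s) \<noteq> cls f i"
    using cls_par[OF assms(1), of "i+s"] cls_par[OF assms(1), of i] so by auto
  ultimately show False by simp
qed

end

lemma nat_idx1: assumes "i < n" shows "nat ((int i + 1) mod int n) = (i + 1) mod n"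
proof -
  have "int ((i+1) mod n) = int (i+1) mod int n" by (rule zmod_int)
  also have "int (i+1) = int i + 1" by simp
  finally show ?thesis by (metis nat_int)
qed

lemma nat_idxm1: assumes "i < n" shows "nat ((int i - 1) mod int n) = (i + n - 1) mod n"
proof -
  have "(int i - 1) mod int n = (int i - 1 + int n) mod int n" by simp
  also have "int i - 1 + int n = int (i + n - 1)" using assms by simp
  finally have "(int i - 1) mod int n = int ((i + n - 1) mod n)" by (simp add: zmod_int)
  thus ?thesis by simp
qed

definition cwalk :: "'a list \<Rightarrow> int \<Rightarrow> 'a" where "cwalk C m = C ! nat (m mod int (length C))"

context hatg begin

lemma D_orient: "orientation E G = D" by (simp add: D_def)

lemma alt_from_walk:
  assumes w: "walk f" and p3: "p \<ge> 3" and per: "\<forall>n. f (n + int p) = f n"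
    and inj: "\<forall>i j. 0 \<le> i \<longrightarrow> i < j \<longrightarrow> j < int p \<longrightarrow> f i \<noteq> f j"
  shows "alt_cycle V E G (map (\<lambda>k. f (int k)) [0..<p])"
proof -
  define C where "C = map (\<lambda>k. f (int k)) [0..<p]"
  have len: "length C = p" unfolding C_def by simp
  have nth: "k < p \<Longrightarrow> C ! k = f (int k)" for k unfolding C_def by simp
  have p0: "p > 0" using p3 by simp
  have fm: "f (a mod int p) = f a" for a by (rule per_mod[OF per])
  have dist: "distinct C" unfolding C_def distinct_map
  proof
    show "distinct [0..<p]" by simp
    show "inj_on (\<lambda>k. f (int k)) (set [0..<p])"
    proof (rule inj_onI)
      fix a b assume ab: "a \<in> set [0..<p]" "b \<in> set [0..<p]" "f (int a) = f (int b)"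
      show "a = b"
      proof (rule ccontr)
        assume "a \<noteq> b"
        hence "a < b \<or> b < a" by auto
        thus False using inj ab by (metis atLeastLessThan_iff of_nat_0_le_iff of_nat_less_iff set_upt)
      qed
    qed
  qed
  have sV: "set C \<subseteq> V" unfolding C_def using walk_V[OF w] by auto
  have s1: "C ! ((i + 1) mod p) = f (int i + 1)" if "i < p" for i
  proof -
    have "C ! ((i + 1) mod p) = f (int ((i+1) mod p))" using nth p0 by simp
    also have "int ((i+1) mod p) = (int i + 1) mod int p"
    proof -
      have "int ((i+1) mod p) = int (i+1) mod int p" by (rule zmod_int)
      also have "int (i+1) = int i + 1" by simp
      finally show ?thesis .
    qed
    finally show ?thesis using fm by simp
  qed
  have s2: "C ! ((i + p - 1) mod p) = f (int i - 1)" if "i < p" for i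
  proof -
    have "C ! ((i + p - 1) mod p) = f (int ((i + p - 1) mod p))" using nth p0 by simp
    also have "int ((i + p - 1) mod p) = (int i - 1) mod int p"
      using nat_idxm1[OF that] that by (metis int_nat_eq mod_int_pos_iff of_nat_0_less_iff p0)
    finally show ?thesis using fm by simp
  qed
  have edges: "\<forall>i<p. {C ! i, C ! ((i + 1) mod p)} \<in> E"
    using s1 nth walk_E[OF w] by simp
  have alt: "\<forall>i<p. (C ! ((i + p - 1) mod p), C ! i) \<in> D \<longleftrightarrow> (C ! ((i + 1) mod p), C ! i) \<in> D"
  proof (intro allI impI)
    fix i assume i: "i < p"
    have e: "{f (int i), f (int i - 1)} \<in> E" using walk_E[OF w, of "int i - 1"] by (simp add: insert_commute)
    have "f (int i + 1) = other (f (int i)) (f (int i - 1))" by (rule walk_rule1[OF w])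
    thus "(C ! ((i + p - 1) mod p), C ! i) \<in> D \<longleftrightarrow> (C ! ((i + 1) mod p), C ! i) \<in> D"
      using s1[OF i] s2[OF i] nth[OF i] other_same[OF e] by simp
  qed
  show ?thesis unfolding alt_cycle_def Let_def D_orient C_def[symmetric] len
    using p3 dist sV edges alt by blast
qed

lemma walk_from_alt:
  assumes a: "alt_cycle V E G C"
  defines "n \<equiv> length C"
  defines "F \<equiv> cwalk C"
  shows "walk F" "\<forall>m. F (m + int n) = F m" "\<And>k. k < n \<Longrightarrow> F (int k) = C ! k"
    "set C = range F" "cycle_edges C = {{F m, F (m+1)} | m. True}" "n \<ge> 3"
    "\<And>i j. 0 \<le> i \<Longrightarrow> i < j \<Longrightarrow> j < int n \<Longrightarrow> F i \<noteq> F j"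
proof -
  have Fd: "F = (\<lambda>m. C ! nat (m mod int n))" unfolding F_def cwalk_def n_def ..
  have A: "n \<ge> 3" "distinct C" "set C \<subseteq> V" "\<forall>i<n. {C ! i, C ! ((i + 1) mod n)} \<in> E"
    "\<forall>i<n. (C ! ((i + n - 1) mod n), C ! i) \<in> D \<longleftrightarrow> (C ! ((i + 1) mod n), C ! i) \<in> D"
    using a unfolding alt_cycle_def Let_def D_orient n_def by auto
  show "n \<ge> 3" using A(1) .
  have n0: "n > 0" using A(1) by simp
  have Fk: "F (int k) = C ! k" if "k < n" for k unfolding Fd using that by simp
  thus "\<And>k. k < n \<Longrightarrow> F (int k) = C ! k" .
  have Fmod: "F m = F (m mod int n)" for m unfolding Fd by simp
  show per: "\<forall>m. F (m + int n) = F m" unfolding Fd by simp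
  have F1: "F (int i + 1) = C ! ((i + 1) mod n)" if "i < n" for i unfolding Fd using nat_idx1[OF that] by simp
  have Fm1: "F (int i - 1) = C ! ((i + n - 1) mod n)" if "i < n" for i unfolding Fd using nat_idxm1[OF that] by simp
  have red: "\<exists>i<n. m mod int n = int i" for m
    using n0 by (metis int_nat_eq mod_int_pos_iff nat_less_iff of_nat_0_less_iff pos_mod_bound)
  have Fp1: "F (m + 1) = F (m mod int n + 1)" for m
    using Fmod[of "m+1"] Fmod[of "m mod int n + 1"] by (simp add: mod_add_left_eq)
  have Fm1': "F (m - 1) = F (m mod int n - 1)" for m
    using Fmod[of "m-1"] Fmod[of "m mod int n - 1"] by (simp add: mod_diff_left_eq)
  have E1: "{F m, F (m+1)} \<in> E" for m
  proof -
    obtain i where i: "i < n" "m mod int n = int i" using red by blast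
    have "F m = C ! i" using Fmod[of m] i Fk by simp
    moreover have "F (m+1) = C ! ((i+1) mod n)" using Fp1[of m] i F1 by simp
    ultimately show ?thesis using A(4) i by simp
  qed
  show "walk F" unfolding walk_def
  proof
    fix m
    obtain i where i: "i < n" "(m+1) mod int n = int i" using red by blast
    have c: "F (m+1) = C ! i" using Fmod[of "m+1"] i Fk by simp
    have p: "F m = C ! ((i + n - 1) mod n)"
    proof -
      have "F m = F ((m+1) - 1)" by simp
      also have "\<dots> = F ((m+1) mod int n - 1)" by (rule Fm1')
      finally show ?thesis using i Fm1 by simp
    qed
    have q: "F (m+2) = C ! ((i + 1) mod n)"
    proof -
      have "F (m+2) = F ((m+1) + 1)" by (simp add: add.assoc)
      also have "\<dots> = F ((m+1) mod int n + 1)" by (rule Fp1)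
      finally show ?thesis using i F1 by simp
    qed
    have e1: "{C ! i, C ! ((i + n - 1) mod n)} \<in> E"
      using E1[of m] c p by (simp add: insert_commute)
    have e2: "{C ! i, C ! ((i + 1) mod n)} \<in> E" using A(4) i by simp
    have ne: "C ! ((i + 1) mod n) \<noteq> C ! ((i + n - 1) mod n)"
    proof
      assume "C ! ((i + 1) mod n) = C ! ((i + n - 1) mod n)"
      moreover have "(i + 1) mod n < length C" "(i + n - 1) mod n < length C" using n0 n_def by simp_all
      ultimately have "(i + 1) mod n = (i + n - 1) mod n" using nth_eq_iff_index_eq[OF A(2)] by blast
      moreover have "(i + 1) mod n \<noteq> (i + n - 1) mod n"
      proof (cases "i + 1 < n")
        case True
        hence m1: "(i+1) mod n = i + 1" by simp
        show ?thesis
        proof (cases "i = 0")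
          case True thus ?thesis using m1 A(1) by simp
        next
          case False
          hence "(i + n - 1) mod n = i - 1" using i(1)
            by (metis Nat.add_diff_assoc2 add.commute less_imp_diff_less linorder_not_less mod_add_self2
                mod_less not_gr_zero Suc_leI One_nat_def)
          thus ?thesis using m1 by simp
        qed
      next
        case False
        hence "i = n - 1" using i(1) by simp
        hence "(i+1) mod n = 0" "(i + n - 1) mod n = n - 2" using A(1)
          by (simp_all add: mod_if)
        thus ?thesis using A(1) by simp
      qed
      ultimately show False by simp
    qed
    have "C ! ((i + 1) mod n) = other (C ! i) (C ! ((i + n - 1) mod n))"
      using other_char[OF e1 e2 ne] A(5) i by simp
    hence "F (m + 2) = other (F (m + 1)) (F m)" using c p q by simp
    thus "{F m, F (m + 1)} \<in> E \<and> F (m + 2) = other (F (m + 1)) (F m)" using E1[of m] by blast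
  qed
  show "set C = range F"
  proof
    show "set C \<subseteq> range F"
    proof
      fix x assume "x \<in> set C"
      then obtain k where k: "k < length C" "x = C ! k" by (auto simp: in_set_conv_nth)
      hence "x = F (int k)" using Fk n_def by simp
      thus "x \<in> range F" by simp
    qed
    show "range F \<subseteq> set C"
    proof
      fix x assume "x \<in> range F"
      then obtain m where m: "x = F m" by auto
      obtain i where i: "i < n" "m mod int n = int i" using red by blast
      show "x \<in> set C" using m Fmod[of m] i Fk n_def by simp
    qed
  qed
  show "cycle_edges C = {{F m, F (m+1)} | m. True}"
  proof
    show "cycle_edges C \<subseteq> {{F m, F (m+1)} | m. True}"
    proof
      fix e assume "e \<in> cycle_edges C"
      then obtain i where i: "i < n" "e = {C ! i, C ! ((i + 1) mod n)}" unfolding cycle_edges_def n_def by auto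
      hence "e = {F (int i), F (int i + 1)}" using Fk F1 by simp
      thus "e \<in> {{F m, F (m+1)} | m. True}" by blast
    qed
    show "{{F m, F (m+1)} | m. True} \<subseteq> cycle_edges C"
    proof
      fix e assume "e \<in> {{F m, F (m+1)} | m. True}"
      then obtain m where m: "e = {F m, F (m+1)}" by auto
      obtain i where i: "i < n" "m mod int n = int i" using red by blast
      have "e = {C ! i, C ! ((i + 1) mod n)}" using m Fmod[of m] Fp1[of m] i Fk F1 by simp
      thus "e \<in> cycle_edges C" unfolding cycle_edges_def using i n_def by blast
    qed
  qed
  show "\<And>i j. 0 \<le> i \<Longrightarrow> i < j \<Longrightarrow> j < int n \<Longrightarrow> F i \<noteq> F j"
  proof
    fix i j :: int assume ij: "0 \<le> i" "i < j" "j < int n" "F i = F j"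
    have "F (int (nat i)) = F (int (nat j))" using ij by simp
    moreover have "nat i < n" "nat j < n" using ij by auto
    ultimately have "C ! nat i = C ! nat j" using Fk by metis
    hence "nat i = nat j" using A(2) ij n_def by (simp add: nth_eq_iff_index_eq)
    thus False using ij by simp
  qed
qed

end

definition P6 :: "(int \<Rightarrow> 'a) \<Rightarrow> bool" where "P6 f \<longleftrightarrow> (\<forall>a b. f a = f b \<longleftrightarrow> a mod 6 = b mod 6)"

lemma P6_shift: "P6 f \<Longrightarrow> P6 (\<lambda>n. f (n + k))"
  unfolding P6_def by (simp add: mod_eq_dvd_iff)

lemma P6_rev: "P6 f \<Longrightarrow> P6 (\<lambda>n. f (k - n))"
proof -
  assume a: "P6 f"
  have "(6::int) dvd (k - x) - (k - y) \<longleftrightarrow> 6 dvd x - y" for x y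
  proof -
    have "(k - x) - (k - y) = - (x - y)" by simp
    thus ?thesis by (metis dvd_minus_iff)
  qed
  thus ?thesis using a unfolding P6_def by (simp add: mod_eq_dvd_iff)
qed

lemma P6_comp: "P6 f \<Longrightarrow> inj g \<Longrightarrow> P6 (\<lambda>n. g (f n))"
  unfolding P6_def by (simp add: inj_eq)

lemma P6_mod: "P6 f \<Longrightarrow> f a = f (a mod 6)"
  unfolding P6_def by simp

context hatg begin

lemma alt_exists: "\<exists>C. alt_cycle V E G C"
proof -
  obtain x where x: "x \<in> V" using V_ne by auto
  have "nbhd E x \<noteq> {}" using nbhd_card[OF x] by auto
  then obtain v where v: "{x,v} \<in> E" unfolding nbhd_def by auto
  obtain f q where f: "walk f" "q > 0" "\<forall>n. f (n + int q) = f n" using walk_exists[OF v] by blast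
  define Pp where "Pp p \<longleftrightarrow> p > 0 \<and> (\<forall>n. f (n + int p) = f n)" for p
  have Pq: "Pp q" using f Pp_def by simp
  define p where "p = (LEAST p. Pp p)"
  have Pp: "Pp p" unfolding p_def using Pq by (rule LeastI)
  have minp: "\<And>s. s < p \<Longrightarrow> \<not> Pp s" unfolding p_def by (rule not_less_Least)
  have p0: "p > 0" and per: "\<forall>n. f (n + int p) = f n" using Pp Pp_def by auto
  have inj: "\<forall>i j. 0 \<le> i \<longrightarrow> i < j \<longrightarrow> j < int p \<longrightarrow> f i \<noteq> f j"
  proof (intro allI impI notI)
    fix i j assume ij: "0 \<le> i" "i < j" "j < int p" "f i = f j"
    show False
    proof (cases "cls f i = cls f j")
      case True
      have s: "\<forall>n. f (n + (j - i)) = f n" using walk_same[OF f(1) ij(4) True] by blast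
      have "Pp (nat (j - i))" unfolding Pp_def using s ij by simp
      moreover have "nat (j - i) < p" using ij by simp
      ultimately show False using minp by blast
    next
      case False thus False using walk_diff[OF f(1) ij(4)] by blast
    qed
  qed
  have p3: "p \<ge> 3"
  proof (rule ccontr)
    assume "\<not> p \<ge> 3"
    hence "p = 1 \<or> p = 2" using p0 by auto
    thus False
    proof
      assume "p = 1" hence "f (0 + 1) = f 0" using per by (metis of_nat_1)
      thus False using walk_ne[OF f(1), of 0] by simp
    next
      assume "p = 2" hence "f (0 + 2) = f 0" using per by (metis of_nat_numeral)
      thus False using walk_ne2[OF f(1), of 0] by simp
    qed
  qed
  show ?thesis using alt_from_walk[OF f(1) p3 per inj] by blast
qed

definition C0 where "C0 = (SOME C. alt_cycle V E G C)"

lemma C0_alt: "alt_cycle V E G C0"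
  unfolding C0_def using alt_exists by (rule someI_ex)

lemma P6_of_alt6:
  assumes "walk F" "\<forall>m. F (m + 6) = F m" "\<And>i j. 0 \<le> i \<Longrightarrow> i < j \<Longrightarrow> j < 6 \<Longrightarrow> F i \<noteq> F j"
  shows "P6 F"
  unfolding P6_def
proof (intro allI iffI)
  fix a b
  have pm: "F x = F (x mod 6)" for x using per_mod[of F 6 x] assms(2) by simp
  show "a mod 6 = b mod 6 \<Longrightarrow> F a = F b" using pm by metis
  assume e: "F a = F b"
  show "a mod 6 = b mod 6"
  proof (rule ccontr)
    assume ne: "a mod 6 \<noteq> b mod 6"
    have r: "0 \<le> a mod 6" "a mod 6 < 6" "0 \<le> b mod 6" "b mod 6 < 6" by simp_all
    have "F (a mod 6) = F (b mod 6)" using e pm by metis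
    thus False using assms(3) ne r by (metis linorder_neqE)
  qed
qed

end

definition wedges :: "(int \<Rightarrow> 'a) \<Rightarrow> 'a set set" where "wedges f = {{f m, f (m+1)} | m. True}"

lemma wedges_shift: "wedges (\<lambda>n. f (n + k)) = wedges f"
  unfolding wedges_def
proof (intro equalityI subsetI)
  fix e assume "e \<in> {{f (m + k), f (m + 1 + k)} |m. True}"
  then obtain m where "e = {f (m + k), f (m + k + 1)}" by (auto simp: algebra_simps)
  thus "e \<in> {{f m, f (m + 1)} |m. True}" by blast
next
  fix e assume "e \<in> {{f m, f (m + 1)} |m. True}"
  then obtain m where "e = {f m, f (m + 1)}" by auto
  hence "e = {f ((m - k) + k), f ((m - k) + 1 + k)}" by (simp add: algebra_simps)
  thus "e \<in> {{f (m + k), f (m + 1 + k)} |m. True}" by blast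
qed

lemma wedges_rev: "wedges (\<lambda>n. f (k - n)) = wedges f"
  unfolding wedges_def
proof (intro equalityI subsetI)
  fix e assume "e \<in> {{f (k - m), f (k - (m + 1))} |m. True}"
  then obtain m where "e = {f (k - m), f (k - (m + 1))}" by auto
  hence "e = {f (k - m - 1), f (k - m - 1 + 1)}" by (auto simp: algebra_simps)
  thus "e \<in> {{f m, f (m + 1)} |m. True}" by blast
next
  fix e assume "e \<in> {{f m, f (m + 1)} |m. True}"
  then obtain m where "e = {f m, f (m + 1)}" by auto
  hence "e = {f (k - (k - m - 1)), f (k - ((k - m - 1) + 1))}" by (auto simp: algebra_simps)
  thus "e \<in> {{f (k - m), f (k - (m + 1))} |m. True}" by blast
qed

lemma range_shift: fixes f :: "int \<Rightarrow> 'a" shows "range (\<lambda>n. f (n + k)) = range f"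
proof (intro equalityI subsetI)
  fix y assume "y \<in> range f" then obtain m where "y = f m" by auto
  hence "y = f ((m - k) + k)" by simp
  thus "y \<in> range (\<lambda>n. f (n + k))" by blast
qed auto

lemma range_rev: fixes f :: "int \<Rightarrow> 'a" shows "range (\<lambda>n. f (k - n)) = range f"
proof (intro equalityI subsetI)
  fix y assume "y \<in> range f" then obtain m where "y = f m" by auto
  hence "y = f (k - (k - m))" by simp
  thus "y \<in> range (\<lambda>n. f (k - n))" by blast
qed auto

locale hat2 = hatg +
  assumes rad3: "rad V E G = 3" and att2: "att V E G = 2"
begin

lemma C0_len: "length C0 = 6"
proof -
  have l: "length C0 div 2 = 3" using rad3 unfolding rad_def C0_def by simp
  define F where "F = cwalk C0"
  note W = walk_from_alt[OF C0_alt, folded F_def]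
  have "length C0 = 6 \<or> length C0 = 7" using l by auto
  moreover have "length C0 \<noteq> 7"
  proof
    assume "length C0 = 7"
    hence p: "F (m + 7) = F m" for m using W(2) by (metis of_nat_numeral)
    have "cls F (0 + 7) = cls F 0" unfolding cls_def using p[of 0] p[of 1] by simp
    moreover have "cls F (0 + 7) \<longleftrightarrow> \<not> cls F 0" using cls_par[OF W(1), of 7] by simp
    ultimately show False by simp
  qed
  ultimately show ?thesis by simp
qed

lemma walk_P6: assumes "walk f" shows "P6 f"
proof -
  define F where "F = cwalk C0"
  note W = walk_from_alt[OF C0_alt, folded F_def]
  have F6: "P6 F"
  proof (rule P6_of_alt6[OF W(1)])
    show "\<forall>m. F (m + 6) = F m" using W(2) C0_len by (metis of_nat_numeral)
    show "\<And>i j. 0 \<le> i \<Longrightarrow> i < j \<Longrightarrow> j < 6 \<Longrightarrow> F i \<noteq> F j" using W(7) C0_len by simp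
  qed
  have fwd: "P6 f" if w: "walk f" and d: "(f 0, f 1) \<in> D" for f
  proof -
    obtain m where m: "cls F m" 
    proof (cases "cls F 0")
      case True thus ?thesis using that by blast
    next
      case False hence "cls F (0+1)" using cls_step[OF W(1), of 0] by simp
      thus ?thesis using that by simp
    qed
    obtain g where g: "g \<in> G" "g (F m) = f 0" "g (F (m+1)) = f 1"
      using D_arc_trans[OF m[unfolded cls_def] d] by blast
    have h1: "(\<lambda>n. g (F (n + m))) 0 = f 0" using g by simp
    have h2: "(\<lambda>n. g (F (n + m))) (0+1) = f (0+1)" using g by (simp add: add.commute)
    have "f n = g (F (n + m))" for n using walk_det[OF walk_G[OF walk_shift[OF W(1)] g(1)] w h1 h2] by simp
    hence "f = (\<lambda>n. g (F (n + m)))" by auto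
    thus ?thesis using P6_comp[OF P6_shift[OF F6] G_inj[OF g(1)]] by simp
  qed
  show ?thesis
  proof (cases "(f 0, f 1) \<in> D")
    case True thus ?thesis using fwd assms by blast
  next
    case False
    hence "(f 1, f 0) \<in> D" using D_total walk_E[OF assms, of 0] by (metis insert_commute add.left_neutral)
    hence "P6 (\<lambda>n. f (1 - n))" using fwd[OF walk_rev[OF assms, of 1]] by simp
    hence "P6 (\<lambda>n. (\<lambda>n. f (1 - n)) (1 - n))" by (rule P6_rev)
    thus ?thesis by simp
  qed
qed

lemma walk_at: assumes "x \<in> V" shows "\<exists>f. walk f \<and> f 0 = x \<and> cls f 0 = c"
proof (cases c)
  case True
  have "Out x \<noteq> {}" using cardO(1)[OF assms] by auto
  then obtain v where v: "(x,v) \<in> D" unfolding Out_def by auto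
  then obtain f q where "walk f" "f 0 = x" "f 1 = v" using walk_exists D_E by blast
  thus ?thesis using True v unfolding cls_def by auto
next
  case False
  have "Inn x \<noteq> {}" using cardO(2)[OF assms] by auto
  then obtain v where v: "(v,x) \<in> D" unfolding Inn_def by auto
  hence "{x,v} \<in> E" using D_E by (simp add: insert_commute)
  then obtain f q where "walk f" "f 0 = x" "f 1 = v" using walk_exists by blast
  thus ?thesis using False v D_antisym unfolding cls_def by auto
qed

definition L6 :: "(int \<Rightarrow> 'a) \<Rightarrow> 'a list" where "L6 f = map (\<lambda>k. f (int k)) [0..<6]"

lemma L6: assumes "walk f"
  shows "alt_cycle V E G (L6 f)" "set (L6 f) = range f" "cycle_edges (L6 f) = wedges f"
proof -
  have P: "P6 f" using walk_P6[OF assms] .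
  have per: "\<forall>n. f (n + int 6) = f n" using P unfolding P6_def by simp
  have inj: "\<forall>i j. 0 \<le> i \<longrightarrow> i < j \<longrightarrow> j < int 6 \<longrightarrow> f i \<noteq> f j" using P unfolding P6_def by auto
  show A: "alt_cycle V E G (L6 f)" unfolding L6_def using alt_from_walk[OF assms _ per inj] by simp
  define F where "F = cwalk (L6 f)"
  note W = walk_from_alt[OF A, folded F_def]
  have "F m = f m" for m
  proof -
    have lt: "nat (m mod 6) < 6" by simp
    have "F m = f (int (nat (m mod 6)))" unfolding F_def L6_def cwalk_def using lt by simp
    hence "F m = f (m mod 6)" by simp
    thus ?thesis using P6_mod[OF P, of m] by simp
  qed
  hence FF: "F = f" by auto
  show "set (L6 f) = range f" using W(4) FF by simp
  show "cycle_edges (L6 f) = wedges f" using W(5) FF unfolding wedges_def by simp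
qed

lemma same_cls_range: assumes "walk h" "walk w" "h 0 = w 0" "cls h 0 = cls w 0"
  shows "range h = range w"
proof -
  have "(\<forall>n. h n = w n) \<or> (\<forall>n. h n = w (- n))" by (rule walk_same_vertex[OF assms])
  thus ?thesis
  proof
    assume "\<forall>n. h n = w n" thus ?thesis by auto
  next
    assume "\<forall>n. h n = w (- n)"
    hence "h = (\<lambda>n. w (0 - n))" by auto
    thus ?thesis using range_rev[of w 0] by simp
  qed
qed

lemma same_cls_wedges: assumes "walk h" "walk w" "h 0 = w 0" "cls h 0 = cls w 0"
  shows "wedges h = wedges w"
proof -
  have "(\<forall>n. h n = w n) \<or> (\<forall>n. h n = w (- n))" by (rule walk_same_vertex[OF assms])
  thus ?thesis
  proof
    assume "\<forall>n. h n = w n" thus ?thesis by (metis ext)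
  next
    assume "\<forall>n. h n = w (- n)"
    hence "h = (\<lambda>n. w (0 - n))" by auto
    thus ?thesis using wedges_rev[of w 0] by simp
  qed
qed

lemma wedges_differ: assumes "walk f" "walk h" "f 0 = h 0" "cls f 0" "\<not> cls h 0"
  shows "wedges f \<noteq> wedges h"
proof
  assume eq: "wedges f = wedges h"
  have "{f 0, f (0+1)} \<in> wedges f" unfolding wedges_def by blast
  hence "{f 0, f 1} \<in> wedges h" using eq by simp
  then obtain m where m: "{f 0, f 1} = {h m, h (m+1)}" unfolding wedges_def by blast
  have d: "(f 0, f 1) \<in> D" using assms(4) unfolding cls_def by simp
  have P: "P6 h" using walk_P6[OF assms(2)] .
  show False
  proof (cases "f 0 = h m")
    case True
    hence f1: "f 1 = h (m+1)" using m walk_ne[OF assms(1), of 0] by (auto simp: doubleton_eq_iff)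
    have "h m = h 0" using True assms(3) by simp
    hence "m mod 6 = 0" using P unfolding P6_def by simp
    hence "even m" by presburger
    hence "\<not> cls h m" using cls_par[OF assms(2), of m] assms(5) by simp
    thus False using d True f1 unfolding cls_def by simp
  next
    case False
    hence f0: "f 0 = h (m+1)" "f 1 = h m" using m by (auto simp: doubleton_eq_iff)
    have "h (m+1) = h 0" using f0 assms(3) by simp
    hence "(m+1) mod 6 = 0" using P unfolding P6_def by simp
    hence "odd m" by presburger
    hence "cls h m" using cls_par[OF assms(2), of m] assms(5) by simp
    hence "(f 1, f 0) \<in> D" using f0 unfolding cls_def by simp
    thus False using d D_antisym by blast
  qed
qed

end

context hat2 begin

lemma att_base: "\<exists>h w. walk h \<and> walk w \<and> h 0 = w 0 \<and> cls h 0 \<noteq> cls w 0 \<and> card (range h \<inter> range w) = 2"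
proof -
  define Q where "Q S \<longleftrightarrow> (\<exists>C1 C2. alt_cycle V E G C1 \<and> alt_cycle V E G C2 \<and>
       cycle_edges C1 \<noteq> cycle_edges C2 \<and> set C1 \<inter> set C2 \<noteq> {} \<and> S = set C1 \<inter> set C2)" for S
  have ex: "\<exists>S. Q S"
  proof -
    obtain x where x: "x \<in> V" using V_ne by auto
    obtain f where f: "walk f" "f 0 = x" "cls f 0" using walk_at[OF x, of True] by auto
    obtain h where h: "walk h" "h 0 = x" "\<not> cls h 0" using walk_at[OF x, of False] by auto
    have "cycle_edges (L6 f) \<noteq> cycle_edges (L6 h)"
      using L6(3)[OF f(1)] L6(3)[OF h(1)] wedges_differ[OF f(1) h(1)] f h by simp
    moreover have "set (L6 f) \<inter> set (L6 h) \<noteq> {}" using L6(2)[OF f(1)] L6(2)[OF h(1)] f(2) h(2)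
      by (metis IntI empty_iff rangeI)
    ultimately have "Q (set (L6 f) \<inter> set (L6 h))" unfolding Q_def using L6(1)[OF f(1)] L6(1)[OF h(1)] by blast
    thus ?thesis by blast
  qed
  have QS: "Q (SOME S. Q S)" using ex by (rule someI_ex)
  have c2: "card (SOME S. Q S) = 2" using att2 unfolding att_def Q_def by simp
  obtain C1 C2 where C: "alt_cycle V E G C1" "alt_cycle V E G C2" "cycle_edges C1 \<noteq> cycle_edges C2"
    "set C1 \<inter> set C2 \<noteq> {}" "(SOME S. Q S) = set C1 \<inter> set C2" using QS unfolding Q_def by blast
  note W1 = walk_from_alt[OF C(1)] and W2 = walk_from_alt[OF C(2)]
  define F1 where "F1 = cwalk C1"
  define F2 where "F2 = cwalk C2"
  have r1: "set C1 = range F1" and r2: "set C2 = range F2" using W1(4) W2(4) F1_def F2_def by auto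
  have e1: "cycle_edges C1 = wedges F1" and e2: "cycle_edges C2 = wedges F2"
    using W1(5) W2(5) F1_def F2_def unfolding wedges_def by auto
  have w1: "walk F1" and w2: "walk F2" using W1(1) W2(1) F1_def F2_def by auto
  obtain v where "v \<in> range F1 \<inter> range F2" using C(4) r1 r2 by auto
  then obtain k1 k2 where k: "F1 k1 = v" "F2 k2 = v" by auto
  define H1 where "H1 = (\<lambda>n. F1 (n + k1))"
  define H2 where "H2 = (\<lambda>n. F2 (n + k2))"
  have hw: "walk H1" "walk H2" unfolding H1_def H2_def using walk_shift w1 w2 by auto
  have h0: "H1 0 = H2 0" unfolding H1_def H2_def using k by simp
  have rg: "range H1 = range F1" "range H2 = range F2" unfolding H1_def H2_def by (rule range_shift)+
  have wg: "wedges H1 = wedges F1" "wedges H2 = wedges F2" unfolding H1_def H2_def by (rule wedges_shift)+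
  have cd: "cls H1 0 \<noteq> cls H2 0"
  proof
    assume "cls H1 0 = cls H2 0"
    hence "wedges H1 = wedges H2" using same_cls_wedges[OF hw h0] by simp
    thus False using C(3) e1 e2 wg by simp
  qed
  have "card (range H1 \<inter> range H2) = 2" using c2 C(5) r1 r2 rg by simp
  thus ?thesis using hw h0 cd by blast
qed

lemma att_all: assumes "walk h" "walk w" "h 0 = w 0" "cls h 0 \<noteq> cls w 0"
  shows "card (range h \<inter> range w) = 2"
proof -
  obtain H1 H2 where H: "walk H1" "walk H2" "H1 0 = H2 0" "cls H1 0 \<noteq> cls H2 0"
    "card (range H1 \<inter> range H2) = 2" using att_base by blast
  have x: "h 0 \<in> V" using walk_V[OF assms(1)] .
  have v: "H1 0 \<in> V" using walk_V[OF H(1)] .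
  obtain g where g: "g \<in> G" "g (H1 0) = h 0" using vt[OF v x] by blast
  define K1 where "K1 = (\<lambda>n. g (H1 n))"
  define K2 where "K2 = (\<lambda>n. g (H2 n))"
  have kw: "walk K1" "walk K2" unfolding K1_def K2_def using walk_G H(1,2) g(1) by auto
  have k0: "K1 0 = h 0" "K2 0 = h 0" unfolding K1_def K2_def using g H(3) by auto
  have kc: "cls K1 0 = cls H1 0" "cls K2 0 = cls H2 0" unfolding K1_def K2_def using cls_G g(1) by auto
  have "range K1 \<inter> range K2 = g ` (range H1 \<inter> range H2)" unfolding K1_def K2_def
    using image_Int[OF G_inj[OF g(1)]] by (simp add: image_image)
  hence c: "card (range K1 \<inter> range K2) = 2" using H(5) G_inj[OF g(1)]
    by (simp add: card_image inj_on_subset)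
  show ?thesis
  proof (cases "cls h 0 = cls K1 0")
    case True
    have "range h = range K1" using same_cls_range[OF assms(1) kw(1)] k0 True by simp
    moreover have "range w = range K2" using same_cls_range[OF assms(2) kw(2)] k0 True assms(3,4) H(4) kc by simp
    ultimately show ?thesis using c by simp
  next
    case False
    have "range h = range K2" using same_cls_range[OF assms(1) kw(2)] k0 False H(4) kc by simp
    moreover have "range w = range K1" using same_cls_range[OF assms(2) kw(1)] k0 False assms(3,4) by simp
    ultimately show ?thesis using c by (simp add: Int_commute)
  qed
qed

lemma mod6_neg: "(- k) mod 6 = (k::int) mod 6 \<Longrightarrow> k mod 6 = 0 \<or> k mod 6 = 3" by presburger

lemma fix3: assumes "walk h" "walk w" "h 0 = w 0" "cls h 0 \<noteq> cls w 0"
  "y \<in> range h" "y \<in> range w" "y \<noteq> h 0"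
  shows "y = h 3"
proof -
  define S where "S = range h \<inter> range w"
  have cS: "card S = 2" unfolding S_def by (rule att_all[OF assms(1-4)])
  have hS: "h 0 \<in> S" unfolding S_def using assms(3) by (metis IntI rangeI)
  have yS: "y \<in> S" unfolding S_def using assms(5,6) by simp
  have S2: "S = {h 0, y}" using card2_eq[OF cS hS yS] assms(7) by simp
  obtain g where g: "g \<in> G" "g (h 0) = h 0" "g (h (0+1)) = h (0 - 1)" using refl_elem[OF assms(1)] by blast
  have gh: "g (h n) = h (- n)" for n using refl_walk[OF assms(1) g] by simp
  define K where "K = (\<lambda>n. g (w n))"
  have kw: "walk K" unfolding K_def using walk_G assms(2) g(1) by auto
  have rK: "range K = range w" using same_cls_range[OF kw assms(2)] cls_G[OF g(1)] g(2) assms(3) unfolding K_def by simp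
  obtain k where k: "y = h k" using assms(5) by auto
  obtain k' where k': "y = w k'" using assms(6) by auto
  have "g y = K k'" unfolding K_def using k' by simp
  hence "g y \<in> range K" by simp
  hence "g y \<in> range w" using rK by simp
  moreover have "g y \<in> range h" using k gh by simp
  ultimately have "g y \<in> S" unfolding S_def by simp
  moreover have "g y \<noteq> h 0"
  proof
    assume "g y = h 0"
    hence "g y = g (h 0)" using g(2) by simp
    hence "y = h 0" using G_inj[OF g(1)] by (auto dest: injD)
    thus False using assms(7) by simp
  qed
  ultimately have "g y = y" using S2 by simp
  hence "h (- k) = h k" using k gh by simp
  hence "(- k) mod 6 = k mod 6" using walk_P6[OF assms(1)] unfolding P6_def by simp
  hence "k mod 6 = 0 \<or> k mod 6 = 3" by (rule mod6_neg)
  moreover have "k mod 6 \<noteq> 0"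
  proof
    assume "k mod 6 = 0"
    hence "h k = h 0" using walk_P6[OF assms(1)] unfolding P6_def by simp
    thus False using k assms(7) by simp
  qed
  ultimately have "k mod 6 = 3" by simp
  thus "y = h 3" using k walk_P6[OF assms(1)] unfolding P6_def by simp
qed

lemma ATT: assumes "walk h" "walk w" "h 0 = w 0" "cls h 0 \<noteq> cls w 0" shows "h 3 = w 3"
proof -
  have cS: "card (range h \<inter> range w) = 2" by (rule att_all[OF assms])
  have "range h \<inter> range w - {h 0} \<noteq> {}"
  proof
    assume "range h \<inter> range w - {h 0} = {}"
    hence "range h \<inter> range w \<subseteq> {h 0}" by auto
    hence "card (range h \<inter> range w) \<le> card {h 0}" by (intro card_mono) auto
    hence "card (range h \<inter> range w) \<le> 1" by simp
    thus False using cS by simp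
  qed
  then obtain y where y: "y \<in> range h" "y \<in> range w" "y \<noteq> h 0" by auto
  have "y = h 3" by (rule fix3[OF assms y])
  moreover have "y = w 3" using fix3[OF assms(2) assms(1) assms(3)[symmetric]] assms(4) y assms(3) by auto
  ultimately show ?thesis by simp
qed

definition tau where "tau x = (if x \<in> V then (SOME f. walk f \<and> f 0 = x) 3 else x)"

lemma KEY: assumes "walk f" shows "tau (f n) = f (n + 3)"
proof -
  define x where "x = f n"
  have xV: "x \<in> V" unfolding x_def using walk_V[OF assms] .
  define w where "w = (SOME f. walk f \<and> f 0 = x)"
  have "\<exists>f. walk f \<and> f 0 = x" using walk_at[OF xV] by blast
  hence w: "walk w" "w 0 = x" unfolding w_def by (metis (mono_tags, lifting) someI_ex)+
  have t: "tau x = w 3" unfolding tau_def w_def using xV by simp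
  define h where "h = (\<lambda>m. f (m + n))"
  have hw: "walk h" "h 0 = x" unfolding h_def x_def using walk_shift[OF assms] by auto
  have "h 3 = w 3"
  proof (cases "cls h 0 = cls w 0")
    case True
    have "(\<forall>m. h m = w m) \<or> (\<forall>m. h m = w (- m))" using walk_same_vertex[OF hw(1) w(1)] hw w True by simp
    thus ?thesis
    proof
      assume "\<forall>m. h m = w (- m)"
      hence "h 3 = w (-3)" by simp
      also have "\<dots> = w 3" using walk_P6[OF w(1)] unfolding P6_def by simp
      finally show ?thesis .
    qed simp
  next
    case False thus ?thesis using ATT[OF hw(1) w(1)] hw w by simp
  qed
  thus ?thesis using t unfolding h_def x_def by (simp add: add.commute)
qed

end

context hat2 begin

lemma walk_from: assumes "{x,y} \<in> E" obtains f where "walk f" "f 0 = x" "f 1 = y"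
  using walk_exists[OF assms] by blast

lemma P6_ne: "walk f \<Longrightarrow> a mod 6 \<noteq> b mod 6 \<Longrightarrow> f a \<noteq> f b"
  using walk_P6 unfolding P6_def by blast

lemma P6_eq: "walk f \<Longrightarrow> a mod 6 = b mod 6 \<Longrightarrow> f a = f b"
  using walk_P6 unfolding P6_def by blast

lemma tau_out: "x \<notin> V \<Longrightarrow> tau x = x" unfolding tau_def by simp

lemma tau_props: assumes "x \<in> V" shows "tau x \<in> V" "tau x \<noteq> x" "tau (tau x) = x"
proof -
  obtain f where f: "walk f" "f 0 = x" using walk_at[OF assms] by blast
  have t: "tau x = f 3" using KEY[OF f(1), of 0] f(2) by simp
  show "tau x \<in> V" using t walk_V[OF f(1)] by simp
  show "tau x \<noteq> x" using t f P6_ne[OF f(1), of 3 0] by simp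
  have "tau (f 3) = f 6" using KEY[OF f(1), of 3] by simp
  also have "\<dots> = f 0" using P6_eq[OF f(1), of 6 0] by simp
  finally show "tau (tau x) = x" using t f(2) by simp
qed

lemma tau_tau: "tau (tau x) = x" using tau_props(3) tau_out by (cases "x \<in> V") auto

lemma tau_V_iff: "tau x \<in> V \<longleftrightarrow> x \<in> V" using tau_props(1) tau_out by (cases "x \<in> V") auto

lemma tau_edge1: assumes "{x,y} \<in> E" shows "{tau x, tau y} \<in> E"
proof -
  obtain f where f: "walk f" "f 0 = x" "f 1 = y" using walk_from[OF assms] by blast
  have "tau x = f 3" "tau y = f 4" using KEY[OF f(1), of 0] KEY[OF f(1), of 1] f by simp_all
  thus ?thesis using walk_E[OF f(1), of 3] by simp
qed

lemma tau_edge: "{tau x, tau y} \<in> E \<longleftrightarrow> {x,y} \<in> E"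
  using tau_edge1[of "tau x" "tau y"] tau_edge1[of x y] tau_tau by metis

lemma tau_rev: assumes "(x,y) \<in> D" shows "(tau y, tau x) \<in> D"
proof -
  obtain f where f: "walk f" "f 0 = x" "f 1 = y" using walk_from[OF D_E[OF assms]] by blast
  have t: "tau x = f 3" "tau y = f 4" using KEY[OF f(1), of 0] KEY[OF f(1), of 1] f by simp_all
  have "cls f 0" using assms f unfolding cls_def by simp
  hence "\<not> cls f 3" using cls_par[OF f(1), of 3] by simp
  hence "(f 3, f 4) \<notin> D" unfolding cls_def by simp
  moreover have "{f 3, f 4} \<in> E" using walk_E[OF f(1), of 3] by simp
  ultimately have "(f 4, f 3) \<in> D" using D_total by blast
  thus ?thesis using t by simp
qed

lemma tau_G: assumes "g \<in> G" shows "tau (g x) = g (tau x)"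
proof (cases "x \<in> V")
  case True
  obtain f where f: "walk f" "f 0 = x" using walk_at[OF True] by blast
  have "tau (g (f 0)) = g (f 3)" using KEY[OF walk_G[OF f(1) assms], of 0] by simp
  moreover have "tau (f 0) = f 3" using KEY[OF f(1), of 0] by simp
  ultimately show ?thesis using f(2) by simp
next
  case False thus ?thesis using G_out[OF assms] tau_out by simp
qed

lemma tau_no_edge: "{x, tau x} \<notin> E"
proof
  assume e: "{x, tau x} \<in> E"
  obtain f where f: "walk f" "f 0 = x" "f 1 = tau x" using walk_from[OF e] by blast
  have "tau x = f 3" using KEY[OF f(1), of 0] f by simp
  thus False using f(3) P6_ne[OF f(1), of 1 3] by simp
qed

lemma tau_nbr: assumes "{x,u} \<in> E" "{x, tau u} \<in> E" shows False
proof -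
  obtain f where f: "walk f" "f 0 = x" "f 1 = u" using walk_from[OF assms(1)] by blast
  have tu: "tau u = f 4" using KEY[OF f(1), of 1] f by simp
  obtain w where w: "walk w" "w 0 = x" "w 1 = tau u" using walk_from[OF assms(2)] by blast
  show False
  proof (cases "cls w 0 = cls f 0")
    case True
    have "(\<forall>n. w n = f n) \<or> (\<forall>n. w n = f (- n))" using walk_same_vertex[OF w(1) f(1)] w f True by simp
    hence "tau u = f 1 \<or> tau u = f (-1)" using w(3) by auto
    thus False using tu P6_ne[OF f(1), of 4 1] P6_ne[OF f(1), of 4 "-1"] by auto
  next
    case False
    have ne: "tau u \<noteq> f 0"
    proof
      assume "tau u = f 0"
      hence "u = tau x" using tau_tau f(2) by metis
      thus False using assms(1) tau_no_edge by simp
    qed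
    have "tau u = f 3" using fix3[OF f(1) w(1)] f w False ne tu by (metis rangeI)
    thus False using tu P6_ne[OF f(1), of 4 3] by simp
  qed
qed

end

context hat2 begin

definition nf :: "'a \<Rightarrow> nat" where "nf = (SOME f. inj_on f V)"

lemma nf_inj: "inj_on nf V"
proof -
  have "\<exists>f::'a \<Rightarrow> nat. inj_on f V" using finite_imp_inj_to_nat_seg[OF finV] by blast
  thus ?thesis unfolding nf_def by (rule someI_ex)
qed

definition pr :: "'a \<Rightarrow> nat" where "pr x = min (nf x) (nf (tau x))"

lemma pr_tau: "pr (tau x) = pr x" unfolding pr_def using tau_tau by (simp add: min.commute)

lemma pr_eq: assumes "x \<in> V" "y \<in> V" shows "pr x = pr y \<longleftrightarrow> (y = x \<or> y = tau x)"
proof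
  assume "y = x \<or> y = tau x" thus "pr x = pr y" using pr_tau by auto
next
  assume e: "pr x = pr y"
  have tx: "tau x \<in> V" and ty: "tau y \<in> V" using tau_props(1) assms by auto
  have "nf x = nf y \<or> nf x = nf (tau y) \<or> nf (tau x) = nf y \<or> nf (tau x) = nf (tau y)"
    using e unfolding pr_def by (auto simp: min_def split: if_splits)
  hence "x = y \<or> x = tau y \<or> tau x = y \<or> tau x = tau y"
    using nf_inj assms tx ty by (auto dest: inj_onD)
  thus "y = x \<or> y = tau x" using tau_tau by metis
qed

definition V' where "V' = pr ` V"
definition E' where "E' = {{pr x, pr y} | x y. {x,y} \<in> E}"

lemma E'_iff: assumes "x \<in> V" "y \<in> V"
  shows "{pr x, pr y} \<in> E' \<longleftrightarrow> ({x,y} \<in> E \<or> {x, tau y} \<in> E)"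
proof
  assume "{x,y} \<in> E \<or> {x, tau y} \<in> E"
  thus "{pr x, pr y} \<in> E'" unfolding E'_def using pr_tau by (metis (mono_tags, lifting) mem_Collect_eq)
next
  assume "{pr x, pr y} \<in> E'"
  then obtain a b where ab: "{pr x, pr y} = {pr a, pr b}" "{a,b} \<in> E" unfolding E'_def by auto
  have aV: "a \<in> V" "b \<in> V" using edge_V[OF ab(2)] by auto
  have key: "{x,y} \<in> E \<or> {x, tau y} \<in> E" if "pr x = pr a" "pr y = pr b" "{a,b} \<in> E" "a \<in> V" "b \<in> V" for a b
  proof -
    have "a = x \<or> a = tau x" "b = y \<or> b = tau y" using pr_eq assms that by auto
    thus ?thesis using that(3) tau_edge tau_tau by (metis insert_commute)
  qed
  from ab(1) have "(pr x = pr a \<and> pr y = pr b) \<or> (pr x = pr b \<and> pr y = pr a)" by (auto simp: doubleton_eq_iff)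
  thus "{x,y} \<in> E \<or> {x, tau y} \<in> E"
  proof
    assume "pr x = pr a \<and> pr y = pr b" thus ?thesis using key ab(2) aV by blast
  next
    assume "pr x = pr b \<and> pr y = pr a"
    moreover have "{b,a} \<in> E" using ab(2) by (simp add: insert_commute)
    ultimately show ?thesis using key aV by blast
  qed
qed

lemma E'_elem: assumes "e \<in> E'" obtains x y where "{x,y} \<in> E" "e = {pr x, pr y}"
  using assms unfolding E'_def by auto

lemma E'_pr: assumes "{a,b} \<in> E'" obtains x y where "x \<in> V" "y \<in> V" "a = pr x" "b = pr y" "{x,y} \<in> E"
proof -
  obtain u v where uv: "{u,v} \<in> E" "{a,b} = {pr u, pr v}" using E'_elem[OF assms] by blast
  have V: "u \<in> V" "v \<in> V" using edge_V[OF uv(1)] by auto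
  have "(a = pr u \<and> b = pr v) \<or> (a = pr v \<and> b = pr u)" using uv(2) by (auto simp: doubleton_eq_iff)
  thus ?thesis using that uv(1) V by (metis insert_commute)
qed

lemma E'_G: assumes "g \<in> G" "x \<in> V" "y \<in> V"
  shows "{pr (g x), pr (g y)} \<in> E' \<longleftrightarrow> {pr x, pr y} \<in> E'"
proof -
  have "g x \<in> V" "g y \<in> V" using G_V assms by auto
  hence "{pr (g x), pr (g y)} \<in> E' \<longleftrightarrow> ({g x, g y} \<in> E \<or> {g x, tau (g y)} \<in> E)" using E'_iff by blast
  also have "\<dots> \<longleftrightarrow> ({x,y} \<in> E \<or> {x, tau y} \<in> E)" using G_edge[OF assms(1)] tau_G[OF assms(1)] by simp
  also have "\<dots> \<longleftrightarrow> {pr x, pr y} \<in> E'" using E'_iff assms(2,3) by blast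
  finally show ?thesis .
qed

definition hrep where "hrep n = (SOME y. y \<in> V \<and> pr y = n)"
definition hm :: "('a \<Rightarrow> 'a) \<Rightarrow> nat \<Rightarrow> nat" where "hm g n = (if n \<in> V' then pr (g (hrep n)) else n)"
definition H where "H = hm ` G"

lemma hrep: assumes "n \<in> V'" shows "hrep n \<in> V" "pr (hrep n) = n"
proof -
  have "\<exists>y. y \<in> V \<and> pr y = n" using assms unfolding V'_def by auto
  hence "hrep n \<in> V \<and> pr (hrep n) = n" unfolding hrep_def by (rule someI_ex)
  thus "hrep n \<in> V" "pr (hrep n) = n" by auto
qed

lemma pr_V': "x \<in> V \<Longrightarrow> pr x \<in> V'" unfolding V'_def by auto

lemma pr_G_cong: assumes "g \<in> G" "x \<in> V" "y \<in> V" "pr x = pr y" shows "pr (g x) = pr (g y)"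
proof -
  have "y = x \<or> y = tau x" using pr_eq assms(2,3,4) by auto
  thus ?thesis using tau_G[OF assms(1)] pr_tau by metis
qed

lemma hm_pr: assumes "g \<in> G" "x \<in> V" shows "hm g (pr x) = pr (g x)"
proof -
  have n: "pr x \<in> V'" using pr_V'[OF assms(2)] .
  have "pr (g (hrep (pr x))) = pr (g x)" using pr_G_cong[OF assms(1) hrep(1)[OF n] assms(2)] hrep(2)[OF n] by simp
  thus ?thesis unfolding hm_def using n by simp
qed

lemma hm_out: "n \<notin> V' \<Longrightarrow> hm g n = n" unfolding hm_def by simp

lemma V'_E: "n \<in> V' \<Longrightarrow> \<exists>x\<in>V. n = pr x" unfolding V'_def by auto

lemma hm_comp: assumes "f \<in> G" "g \<in> G" shows "hm f \<circ> hm g = hm (f \<circ> g)"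
proof
  fix n show "(hm f \<circ> hm g) n = hm (f \<circ> g) n"
  proof (cases "n \<in> V'")
    case True
    then obtain x where x: "x \<in> V" "n = pr x" using V'_E by blast
    have "g x \<in> V" using G_V assms x by auto
    thus ?thesis using x hm_pr assms G_comp[OF assms] by simp
  next
    case False thus ?thesis using hm_out by simp
  qed
qed

lemma hm_id: "hm id = id"
proof
  fix n show "hm id n = id n"
    using hrep(2) hm_out by (cases "n \<in> V'") (auto simp: hm_def)
qed

lemma finV': "finite V'" unfolding V'_def using finV by simp

lemma simple': "simple_graph V' E'"
  unfolding simple_graph_def
proof (intro conjI ballI)
  show "finite V'" by (rule finV')
  fix e assume "e \<in> E'"
  then obtain x y where xy: "{x,y} \<in> E" "e = {pr x, pr y}" by (rule E'_elem)
  have V: "x \<in> V" "y \<in> V" "x \<noteq> y" using edge_V[OF xy(1)] by auto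
  have "y \<noteq> tau x" using tau_no_edge xy(1) by auto
  hence "pr x \<noteq> pr y" using pr_eq V by auto
  thus "\<exists>a b. a \<noteq> b \<and> a \<in> V' \<and> b \<in> V' \<and> e = {a, b}" using xy(2) pr_V' V by blast
qed

lemma rt_pr: assumes "(x,y) \<in> {(u,v). {u,v} \<in> E}\<^sup>*" shows "(pr x, pr y) \<in> {(u,v). {u,v} \<in> E'}\<^sup>*"
  using assms
proof (induction rule: rtrancl_induct)
  case base thus ?case by simp
next
  case (step y z)
  hence "{pr y, pr z} \<in> E'" unfolding E'_def by auto
  thus ?case using step(3) by (simp add: rtrancl_into_rtrancl)
qed

lemma conn': "connected_graph V' E'"
  unfolding connected_graph_def
proof (intro conjI ballI)
  show "V' \<noteq> {}" unfolding V'_def using V_ne by simp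
  fix a b assume "a \<in> V'" "b \<in> V'"
  then obtain x y where "x \<in> V" "y \<in> V" "a = pr x" "b = pr y" using V'_E by blast
  thus "(a, b) \<in> {(u, v). {u, v} \<in> E'}\<^sup>*" using rt_pr conn unfolding connected_graph_def by blast
qed

lemma cover: "covering_projection V E V' E' pr"
  unfolding covering_projection_def
proof (intro conjI ballI impI)
  show "connected_graph V E" by (rule conn)
  show "connected_graph V' E'" by (rule conn')
  show "pr ` V = V'" by (simp add: V'_def)
  fix x y assume "x \<in> V" "y \<in> V" "{x,y} \<in> E"
  thus "{pr x, pr y} \<in> E'" unfolding E'_def by auto
next
  fix x assume x: "x \<in> V"
  show "bij_betw pr (nbhd E x) (nbhd E' (pr x))"
    unfolding bij_betw_def
  proof
    show "inj_on pr (nbhd E x)"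
    proof (rule inj_onI)
      fix u w assume uw: "u \<in> nbhd E x" "w \<in> nbhd E x" "pr u = pr w"
      hence e: "{x,u} \<in> E" "{x,w} \<in> E" unfolding nbhd_def by auto
      have "w = u \<or> w = tau u" using pr_eq uw(3) edge_V e by blast
      thus "u = w" using tau_nbr e by metis
    qed
    show "pr ` nbhd E x = nbhd E' (pr x)"
    proof
      show "pr ` nbhd E x \<subseteq> nbhd E' (pr x)" unfolding nbhd_def E'_def by auto
      show "nbhd E' (pr x) \<subseteq> pr ` nbhd E x"
      proof
        fix z assume "z \<in> nbhd E' (pr x)"
        hence ez: "{pr x, z} \<in> E'" unfolding nbhd_def by simp
        obtain a b where ab: "a \<in> V" "b \<in> V" "pr x = pr a" "z = pr b" "{a,b} \<in> E" by (rule E'_pr[OF ez])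
        have "{pr x, pr b} \<in> E'" using ez ab by simp
        hence "{x,b} \<in> E \<or> {x, tau b} \<in> E" using E'_iff x ab by blast
        thus "z \<in> pr ` nbhd E x"
        proof
          assume "{x,b} \<in> E" thus ?thesis using ab unfolding nbhd_def by auto
        next
          assume "{x, tau b} \<in> E"
          hence "tau b \<in> nbhd E x" unfolding nbhd_def by simp
          moreover have "pr (tau b) = z" using pr_tau ab by simp
          ultimately show ?thesis by blast
        qed
      qed
    qed
  qed
qed

lemma twofold: "two_fold V V' pr"
  unfolding two_fold_def
proof
  fix n assume "n \<in> V'"
  then obtain x where x: "x \<in> V" "n = pr x" using V'_E by blast
  have "fibre V pr n = {x, tau x}"
  proof
    show "fibre V pr n \<subseteq> {x, tau x}"
    proof
      fix y assume "y \<in> fibre V pr n"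
      hence y: "y \<in> V" "pr x = pr y" using x unfolding fibre_def by auto
      thus "y \<in> {x, tau x}" using pr_eq[OF x(1) y(1)] by simp
    qed
    show "{x, tau x} \<subseteq> fibre V pr n" unfolding fibre_def using x tau_props(1)[OF x(1)] pr_tau tau_tau by auto
  qed
  thus "card (fibre V pr n) = 2" using tau_props(2)[OF x(1)] by simp
qed

end

context hat2 begin

lemma hm_aut: assumes "g \<in> G" shows "graph_aut V' E' (hm g)"
  unfolding graph_aut_def
proof (intro conjI ballI allI impI)
  obtain g' where g': "g' \<in> G" "g' \<circ> g = id" "g \<circ> g' = id" using G_inv[OF assms] by blast
  show "bij_betw (hm g) V' V'"
    unfolding bij_betw_def
  proof
    show "inj_on (hm g) V'"
    proof (rule inj_onI)
      fix a b assume ab: "a \<in> V'" "b \<in> V'" "hm g a = hm g b"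
      obtain x y where xy: "x \<in> V" "a = pr x" "y \<in> V" "b = pr y" using ab V'_E by blast
      have "pr (g x) = pr (g y)" using ab(3) xy hm_pr assms by simp
      hence "g y = g x \<or> g y = tau (g x)" using pr_eq G_V assms xy by blast
      hence "g y = g x \<or> g y = g (tau x)" using tau_G assms by simp
      hence "y = x \<or> y = tau x" using G_inj[OF assms] by (auto dest: injD)
      thus "a = b" using xy pr_tau by auto
    qed
    show "hm g ` V' = V'"
    proof
      show "hm g ` V' \<subseteq> V'"
      proof
        fix n assume "n \<in> hm g ` V'"
        then obtain x where "x \<in> V" "n = hm g (pr x)" using V'_E by blast
        thus "n \<in> V'" using hm_pr assms G_V pr_V' by simp
      qed
      show "V' \<subseteq> hm g ` V'"
      proof
        fix n assume "n \<in> V'"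
        then obtain x where x: "x \<in> V" "n = pr x" using V'_E by blast
        have "g' x \<in> V" using G_V g' x by auto
        moreover have "hm g (pr (g' x)) = n" using hm_pr[OF assms \<open>g' x \<in> V\<close>] x g'(3)
          by (metis comp_apply id_apply)
        ultimately show "n \<in> hm g ` V'" using pr_V' by (metis imageI)
      qed
    qed
  qed
  fix a b assume ab: "a \<in> V'" "b \<in> V'"
  obtain x y where xy: "x \<in> V" "a = pr x" "y \<in> V" "b = pr y" using ab V'_E by blast
  show "{hm g a, hm g b} \<in> E' \<longleftrightarrow> {a, b} \<in> E'" using xy hm_pr assms E'_G by simp
next
  fix n assume "n \<notin> V'" thus "hm g n = n" by (rule hm_out)
qed

lemma H_sub: "aut_subgroup V' E' H"
  unfolding aut_subgroup_def H_def
proof (intro conjI ballI)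
  show "hm ` G \<subseteq> Aut V' E'" unfolding Aut_def using hm_aut by auto
  show "id \<in> hm ` G" using hm_id G_id by (metis imageI)
  fix f g assume "f \<in> hm ` G" "g \<in> hm ` G"
  then obtain f0 g0 where "f0 \<in> G" "g0 \<in> G" "f = hm f0" "g = hm g0" by auto
  thus "f \<circ> g \<in> hm ` G" using hm_comp G_comp by auto
next
  fix f assume "f \<in> hm ` G"
  then obtain f0 where f0: "f0 \<in> G" "f = hm f0" by auto
  obtain g0 where g0: "g0 \<in> G" "g0 \<circ> f0 = id" using G_inv[OF f0(1)] by blast
  have "hm g0 \<circ> f = id" using hm_comp[OF g0(1) f0(1)] g0(2) f0(2) hm_id by simp
  thus "\<exists>g\<in>hm ` G. g \<circ> f = id" using g0(1) by blast
qed

lemma arcD: assumes "{a,b} \<in> E'" obtains x y where "(x,y) \<in> D" "a = pr x" "b = pr y"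
proof -
  obtain u v where uv: "u \<in> V" "v \<in> V" "a = pr u" "b = pr v" "{u,v} \<in> E" by (rule E'_pr[OF assms])
  show ?thesis
  proof (cases "(u,v) \<in> D")
    case True thus ?thesis using that uv by blast
  next
    case False
    hence "(v,u) \<in> D" using D_total uv(5) by blast
    hence "(tau u, tau v) \<in> D" using tau_rev by blast
    thus ?thesis using that uv pr_tau by metis
  qed
qed

lemma arc_trans': "arc_transitive E' H"
  unfolding arc_transitive_def arcs_def
proof (clarify)
  fix a b c d assume ab: "{a,b} \<in> E'" and cd: "{c,d} \<in> E'"
  obtain x y where xy: "(x,y) \<in> D" "a = pr x" "b = pr y" by (rule arcD[OF ab])
  obtain u v where uv: "(u,v) \<in> D" "c = pr u" "d = pr v" by (rule arcD[OF cd])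
  obtain g where g: "g \<in> G" "g x = u" "g y = v" using D_arc_trans[OF xy(1) uv(1)] by blast
  have "x \<in> V" "y \<in> V" using D_V xy(1) by auto
  hence "hm g a = c" "hm g b = d" using hm_pr g xy uv by auto
  thus "\<exists>h\<in>H. h a = c \<and> h b = d" using g(1) unfolding H_def by blast
qed

lemma G_lift: "g \<in> G \<Longrightarrow> is_lift V E pr (hm g) g"
  unfolding is_lift_def Aut_def using G_aut hm_pr by auto

lemma lifts': "lifts V E pr H"
  unfolding lifts_def H_def using G_lift by blast

lemma CT_fib: assumes "c \<in> CT V E pr" "x \<in> V" shows "c x = x \<or> c x = tau x" "c x \<in> V"
proof -
  have a: "graph_aut V E c" "pr (c x) = pr x" using assms unfolding CT_def Aut_def by auto
  show cV: "c x \<in> V" using a(1) assms(2) unfolding graph_aut_def by (meson bij_betwE)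
  show "c x = x \<or> c x = tau x" using pr_eq[OF assms(2) cV] a(2) by simp
qed

lemma rigid: assumes "c \<in> CT V E pr" "z0 \<in> V" "c z0 = z0" shows "c = id"
proof
  have a: "graph_aut V E c" using assms unfolding CT_def Aut_def by auto
  have "c y = y" if "y \<in> V" for y
  proof -
    have "(z0, y) \<in> {(u,v). {u,v} \<in> E}\<^sup>*" using conn assms(2) that unfolding connected_graph_def by blast
    thus ?thesis
    proof (induction rule: rtrancl_induct)
      case base thus ?case using assms(3) .
    next
      case (step y z)
      have e: "{y,z} \<in> E" using step(2) by simp
      have V: "y \<in> V" "z \<in> V" using edge_V[OF e] by auto
      have "{c y, c z} \<in> E" using a V e unfolding graph_aut_def by blast
      hence e2: "{y, c z} \<in> E" using step(3) by simp
      have "c z = z \<or> c z = tau z" using CT_fib[OF assms(1) V(2)] by simp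
      thus ?case using tau_nbr[OF e] e2 by auto
    qed
  qed
  moreover have "c y = y" if "y \<notin> V" for y using a that unfolding graph_aut_def by auto
  ultimately show "c x = id x" for x by (cases "x \<in> V") auto
qed

lemma G_CT: "G \<inter> CT V E pr = {id}"
proof
  show "{id} \<subseteq> G \<inter> CT V E pr" using G_id graph_aut_id unfolding CT_def Aut_def by auto
  show "G \<inter> CT V E pr \<subseteq> {id}"
  proof
    fix c assume c: "c \<in> G \<inter> CT V E pr"
    obtain x where x: "x \<in> V" using V_ne by auto
    have "c x = x"
    proof (rule ccontr)
      assume "c x \<noteq> x"
      hence cx: "c x = tau x" using CT_fib c x by blast
      have "Out x \<noteq> {}" using cardO(1)[OF x] by auto
      then obtain y where y: "(x,y) \<in> D" unfolding Out_def by auto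
      have yV: "y \<in> V" using D_V y by auto
      have d: "(tau x, c y) \<in> D" using D_G[OF _ y, of c] c cx by simp
      have "c y = y \<or> c y = tau y" using CT_fib c yV by blast
      thus False
      proof
        assume "c y = tau y"
        thus False using d tau_rev[OF y] D_antisym by auto
      next
        assume "c y = y"
        hence "{y, tau x} \<in> E" using D_E[OF d] by (simp add: insert_commute)
        moreover have "{y, x} \<in> E" using D_E[OF y] by (simp add: insert_commute)
        ultimately show False using tau_nbr by blast
      qed
    qed
    thus "c \<in> {id}" using rigid c x by blast
  qed
qed

lemma lifted_char: "ht \<in> lifted_group V E pr H \<longleftrightarrow> (\<exists>g\<in>G. ht \<in> Aut V E \<and> (\<forall>x\<in>V. pr (ht x) = pr (g x)))"
  unfolding lifted_group_def H_def is_lift_def using hm_pr by auto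

lemma lifted_eq: "lifted_group V E pr H = {a \<circ> c | a c. a \<in> G \<and> c \<in> CT V E pr}"
proof
  show "lifted_group V E pr H \<subseteq> {a \<circ> c | a c. a \<in> G \<and> c \<in> CT V E pr}"
  proof
    fix ht assume "ht \<in> lifted_group V E pr H"
    then obtain g where g: "g \<in> G" "ht \<in> Aut V E" "\<forall>x\<in>V. pr (ht x) = pr (g x)" using lifted_char by blast
    obtain g' where g': "g' \<in> G" "g' \<circ> g = id" "g \<circ> g' = id" using G_inv[OF g(1)] by blast
    define c where "c = g' \<circ> ht"
    have hc: "ht = g \<circ> c"
    proof
      fix z have "g (g' (ht z)) = ht z" using g'(3) by (metis comp_apply id_apply)
      thus "ht z = (g \<circ> c) z" unfolding c_def by simp
    qed
    have "graph_aut V E ht" using g(2) unfolding Aut_def by simp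
    hence ca: "c \<in> Aut V E" unfolding c_def Aut_def using graph_aut_comp[OF G_aut[OF g'(1)]] by simp
    have "\<forall>x\<in>V. pr (c x) = pr x"
    proof
      fix x assume x: "x \<in> V"
      have "bij_betw ht V V" using \<open>graph_aut V E ht\<close> unfolding graph_aut_def by simp
      hence htV: "ht x \<in> V" using x by (simp add: bij_betwE)
      have gxV: "g x \<in> V" using G_V g(1) x by auto
      have "ht x = g x \<or> ht x = tau (g x)" using pr_eq[OF gxV htV] g(3) x by simp
      hence "c x = g' (g x) \<or> c x = g' (tau (g x))" unfolding c_def by auto
      moreover have "g' (g x) = x" using g'(2) by (metis comp_apply id_apply)
      moreover have "g' (tau (g x)) = tau (g' (g x))" using tau_G[OF g'(1)] by simp
      ultimately have "c x = x \<or> c x = tau x" by simp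
      thus "pr (c x) = pr x" using pr_tau by auto
    qed
    hence "c \<in> CT V E pr" unfolding CT_def using ca by simp
    thus "ht \<in> {a \<circ> c | a c. a \<in> G \<and> c \<in> CT V E pr}" using hc g(1) by blast
  qed
  show "{a \<circ> c | a c. a \<in> G \<and> c \<in> CT V E pr} \<subseteq> lifted_group V E pr H"
  proof
    fix ht assume "ht \<in> {a \<circ> c | a c. a \<in> G \<and> c \<in> CT V E pr}"
    then obtain a c where ac: "ht = a \<circ> c" "a \<in> G" "c \<in> CT V E pr" by blast
    have "graph_aut V E c" using ac(3) unfolding CT_def Aut_def by simp
    hence "ht \<in> Aut V E" using ac(1) graph_aut_comp[OF G_aut[OF ac(2)]] unfolding Aut_def by simp
    moreover have "\<forall>x\<in>V. pr (ht x) = pr (a x)"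
    proof
      fix x assume x: "x \<in> V"
      have "c x = x \<or> c x = tau x" using CT_fib ac(3) x by blast
      moreover have "a (tau x) = tau (a x)" using tau_G[OF ac(2)] by simp
      ultimately show "pr (ht x) = pr (a x)" using ac(1) pr_tau by auto
    qed
    ultimately show "ht \<in> lifted_group V E pr H" using lifted_char ac(2) by blast
  qed
qed

lemma complement_G: "is_complement V E pr H G"
  unfolding is_complement_def
proof (intro conjI)
  show "aut_subgroup V E G" by (rule sub)
  show "G \<subseteq> lifted_group V E pr H" using lifted_char G_aut unfolding Aut_def by auto
  show "G \<inter> CT V E pr = {id}" by (rule G_CT)
  show "lifted_group V E pr H = {a \<circ> c | a c. a \<in> G \<and> c \<in> CT V E pr}" by (rule lifted_eq)
qed

end

context hat2 begin

lemma fibre_pr: assumes "x \<in> V" shows "fibre V pr (pr x) = {x, tau x}"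
proof
  show "fibre V pr (pr x) \<subseteq> {x, tau x}"
  proof
    fix y assume "y \<in> fibre V pr (pr x)"
    hence y: "y \<in> V" "pr x = pr y" unfolding fibre_def by auto
    thus "y \<in> {x, tau x}" using pr_eq[OF assms y(1)] by simp
  qed
  show "{x, tau x} \<subseteq> fibre V pr (pr x)" unfolding fibre_def using assms tau_props(1)[OF assms] pr_tau by auto
qed

lemma nonsec: assumes nb: "\<not> bipartite V E" shows "non_sectional_split V E V' pr H"
  unfolding non_sectional_split_def
proof (intro conjI allI impI)
  show "split_cover V E pr H" unfolding split_cover_def using complement_G by blast
  fix Hb assume comp: "is_complement V E pr H Hb"
  show "\<not> sectional V V' pr Hb"
  proof
    assume "sectional V V' pr Hb"
    then obtain S where S: "S \<subseteq> V" "\<forall>g\<in>Hb. g ` S = S" "\<forall>x'\<in>V'. card (S \<inter> fibre V pr x') = 1"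
      unfolding sectional_def by blast
    have C: "aut_subgroup V E Hb" "Hb \<subseteq> lifted_group V E pr H"
      "lifted_group V E pr H = {a \<circ> c | a c. a \<in> Hb \<and> c \<in> CT V E pr}"
      using comp unfolding is_complement_def by auto
    have Sx: "x \<in> S \<longleftrightarrow> tau x \<notin> S" if x: "x \<in> V" for x
    proof -
      have "card (S \<inter> fibre V pr (pr x)) = 1" using S(3) pr_V'[OF x] by blast
      hence "card (S \<inter> {x, tau x}) = 1" using fibre_pr[OF x] by simp
      moreover have "x \<noteq> tau x" using tau_props(2)[OF x] by simp
      ultimately show ?thesis by (cases "x \<in> S"; cases "tau x \<in> S") auto
    qed
    have HbA: "graph_aut V E a" if "a \<in> Hb" for a using C(1) that unfolding aut_subgroup_def Aut_def by auto
    have Hbtau: "pr (a (tau x)) = pr (a x)" if "a \<in> Hb" "x \<in> V" for a x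
    proof -
      have "a \<in> lifted_group V E pr H" using C(2) that(1) by blast
      hence "\<exists>g\<in>G. a \<in> Aut V E \<and> (\<forall>x\<in>V. pr (a x) = pr (g x))" by (simp only: lifted_char)
      then obtain g where g: "g \<in> G" "\<forall>x\<in>V. pr (a x) = pr (g x)" by blast
      have "pr (a (tau x)) = pr (g (tau x))" using g tau_props(1)[OF that(2)] by simp
      also have "\<dots> = pr (tau (g x))" using tau_G[OF g(1)] by simp
      also have "\<dots> = pr (g x)" by (rule pr_tau)
      also have "\<dots> = pr (a x)" using g that(2) by simp
      finally show ?thesis .
    qed
    have approx: "\<exists>a\<in>Hb. \<forall>z\<in>V. pr (a z) = pr (g z)" if g: "g \<in> G" for g
    proof -
      have "\<exists>g'\<in>G. g \<in> Aut V E \<and> (\<forall>x\<in>V. pr (g x) = pr (g' x))" using g G_aut unfolding Aut_def by auto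
      hence "g \<in> lifted_group V E pr H" by (simp only: lifted_char)
      then obtain a c where ac: "g = a \<circ> c" "a \<in> Hb" "c \<in> CT V E pr" using C(3) by blast
      have "pr (a z) = pr (g z)" if z: "z \<in> V" for z
      proof -
        have "c z = z \<or> c z = tau z" using CT_fib ac(3) z by blast
        thus ?thesis using ac Hbtau[OF ac(2) z] by auto
      qed
      thus ?thesis using ac(2) by blast
    qed
    have aS: "a x \<in> S" if "a \<in> Hb" "x \<in> S" for a x using S(2) that by blast
    show False
    proof (cases "\<exists>x y. {x,y} \<in> E \<and> x \<in> S \<and> y \<in> S")
      case True
      then obtain x y where xy: "{x,y} \<in> E" "x \<in> S" "y \<in> S" by blast
      have sub: "v \<in> S" if "p \<in> S" "q \<in> S" "{p,q} \<in> E" "pr p = pr u" "pr q = pr v" "u \<in> S" "{u,v} \<in> E" for p q u v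
      proof -
        have V: "p \<in> V" "q \<in> V" "u \<in> V" "v \<in> V" using edge_V that(3,7) by auto
        have "u = p \<or> u = tau p" using pr_eq[OF V(1) V(3)] that(4) by simp
        hence pu: "p = u"
        proof
          assume "u = tau p" thus "p = u" using Sx[OF V(1)] that(1,6) by simp
        qed simp
        have "v = q \<or> v = tau q" using pr_eq[OF V(2) V(4)] that(5) by simp
        thus "v \<in> S"
        proof
          assume "v = tau q"
          hence "{u, tau v} \<in> E" using that(3) pu tau_tau by simp
          thus ?thesis using tau_nbr that(7) by blast
        qed (use that in simp)
      qed
      have clos: "v \<in> S" if uv: "{u,v} \<in> E" "u \<in> S" for u v
      proof -
        obtain g where g: "g \<in> G" "g ` {x,y} = {u,v}" using et[OF xy(1) uv(1)] by blast
        obtain a where a: "a \<in> Hb" "\<forall>z\<in>V. pr (a z) = pr (g z)" using approx[OF g(1)] by blast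
        have V: "x \<in> V" "y \<in> V" using edge_V xy(1) by auto
        have ea: "{a x, a y} \<in> E" using HbA[OF a(1)] V xy(1) unfolding graph_aut_def by blast
        have ax: "a x \<in> S" "a y \<in> S" using aS a(1) xy by auto
        have "{g x, g y} = {u,v}" using g(2) by simp
        hence "(g x = u \<and> g y = v) \<or> (g x = v \<and> g y = u)" by (auto simp: doubleton_eq_iff)
        thus ?thesis
        proof
          assume "g x = u \<and> g y = v"
          thus ?thesis using sub[OF ax ea _ _ uv(2) uv(1)] a(2) V by simp
        next
          assume "g x = v \<and> g y = u"
          moreover have "{a y, a x} \<in> E" using ea by (simp add: insert_commute)
          ultimately show ?thesis using sub[OF ax(2) ax(1) _ _ _ uv(2) uv(1)] a(2) V by simp
        qed
      qed
      have xV: "x \<in> V" using S(1) xy(2) by auto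
      have allS: "z \<in> S" if "z \<in> V" for z
      proof -
        have "(x, z) \<in> {(u,v). {u,v} \<in> E}\<^sup>*" using conn xV that unfolding connected_graph_def by blast
        thus ?thesis
        proof (induction rule: rtrancl_induct)
          case base thus ?case using xy(2) .
        next
          case (step y z) thus ?case using clos by simp
        qed
      qed
      have "tau x \<in> S" using allS tau_props(1)[OF xV] by simp
      thus False using Sx[OF xV] xy(2) by simp
    next
      case False
      have "bipartite V E" unfolding bipartite_def
      proof (intro exI[of _ S] conjI ballI)
        show "S \<subseteq> V" by (rule S(1))
        fix e assume e: "e \<in> E"
        then obtain u v where uv: "u \<noteq> v" "u \<in> V" "v \<in> V" "e = {u,v}" by (rule edgeE)
        have eu: "{u,v} \<in> E" using e uv by simp
        have nb2: "\<not> (u \<in> S \<and> v \<in> S)" using False eu by blast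
        have "\<not> (u \<notin> S \<and> v \<notin> S)"
        proof
          assume "u \<notin> S \<and> v \<notin> S"
          hence "tau u \<in> S" "tau v \<in> S" using Sx uv by auto
          moreover have "{tau u, tau v} \<in> E" using tau_edge eu by simp
          ultimately show False using False by blast
        qed
        hence "(u \<in> S \<and> v \<notin> S) \<or> (u \<notin> S \<and> v \<in> S)" using nb2 by blast
        thus "card (e \<inter> S) = 1" using uv by auto
      qed
      thus False using nb by simp
    qed
  qed
qed

end

theorem theorem4p1:
  fixes V :: "'a set" and E :: "'a set set" and G :: "('a \<Rightarrow> 'a) set"
  assumes "simple_graph V E"
    and "connected_graph V E"
    and "\<not> bipartite V E"
    and "tetravalent V E"
    and "aut_subgroup V E G"
    and "half_arc_transitive V E G"
    and "card V > 12"
    and "rad V E G = 3"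
    and "att V E G = 2"
  shows "\<exists>(V' :: nat set) (E' :: nat set set) (p :: 'a \<Rightarrow> nat) (H :: (nat \<Rightarrow> nat) set).
           simple_graph V' E' \<and> covering_projection V E V' E' p \<and> two_fold V V' p \<and>
           aut_subgroup V' E' H \<and> arc_transitive E' H \<and> lifts V E p H \<and>
           non_sectional_split V E V' p H"
proof -
  have "hat2 V E G" unfolding hat2_def hatg_def hat2_axioms_def using assms(1,2,4,5,6,8,9) by (intro conjI)
  then interpret h: hat2 V E G .
  have "simple_graph h.V' h.E' \<and> covering_projection V E h.V' h.E' h.pr \<and> two_fold V h.V' h.pr \<and>
           aut_subgroup h.V' h.E' h.H \<and> arc_transitive h.E' h.H \<and> lifts V E h.pr h.H \<and>
           non_sectional_split V E h.V' h.pr h.H"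
    by (intro conjI h.simple' h.cover h.twofold h.H_sub h.arc_trans' h.lifts' h.nonsec[OF assms(3)])
  thus ?thesis by (intro exI[of _ h.V'] exI[of _ h.E'] exI[of _ h.pr] exI[of _ h.H])
qed


end
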